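(* There exists a seaweed Lie algebra in the simple Lie algebra of type $E_8$ which does not admit a Richardson element. Concretely, with simple roots $\alpha_1,\dots,\alpha_8$ numbered as in Tauvel–Yu (Lie algebras and algebraic groups, Chapter 18), the seaweed Lie algebra $\mathfrak q_{S,T}=\mathfrak p^-_S\cap\mathfrak p^+_T$ with $S=\Pi\setminus\{\alpha_8\}$ and $T=\Pi\setminus\{\alpha_4,\alpha_5\}$ (of dimension 81, with $\dim\mathfrak n^+_{S,T}=56$, $\dim\mathfrak n^-_{S,T}=3$) has no element $x\in\mathfrak n_{S,T}$ with $[x,\mathfrak q_{S,T}]=\mathfrak n_{S,T}$.
   Context: $\mathfrak g$ is a simple Lie algebra over an algebraically closed field of characteristic zero with Cartan subalgebra $\mathfrak h$ inside a Borel subalgebra $\mathfrak b$; $R$, $R^+$, $R^-$, $\Pi$ are the roots, positive roots, negative roots and simple roots, $\mathfrak g_\alpha$ the root spaces. For $S\subseteq\Pi$: $R_S=\mathbb ZS\cap R$, $R_S^\pm=R^\pm\cap R_S$, $\mathfrak p_S^\pm=\mathfrak h\oplus\bigoplus_{\alpha\in R_S\cup R^\pm}\mathfrak g_\alpha$. For $S,T\subseteq\Pi$, $\mathfrak q_{S,T}=\mathfrak p^-_S\cap\mathfrak p^+_T$; $R^+_{S,T}=R^+_S\setminus R_{S\cap T}$, $R^-_{S,T}=R^-_T\setminus R_{S\cap T}$, $\mathfrak n^\pm_{S,T}=\bigoplus_{\alpha\in R^\pm_{S,T}}\mathfrak g_\alpha$, and $\mathfrak n_{S,T}=\mathfrak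 n^+_{S,T}\oplus\mathfrak n^-_{S,T}$ is the nilpotent radical of $\mathfrak q_{S,T}$. A seaweed Lie algebra is an intersection $\mathfrak p\cap\mathfrak p'$ of two parabolic subalgebras with $\mathfrak p+\mathfrak p'=\mathfrak g$ (the $\mathfrak q_{S,T}$ are examples). A Richardson element of $\mathfrak q_{S,T}$ is $x\in\mathfrak n_{S,T}$ with $[x,\mathfrak q_{S,T}]=\mathfrak n_{S,T}$ (equivalently, the orbit of $x$ under $\mathbf Q_{S,T}=\mathbf P^-_S\cap\mathbf P^+_T$ is dense in $\mathfrak n_{S,T}$). *)

theory Defs
  imports "HOL-Computational_Algebra.Polynomial"
begin

section \<open>The root system of type E8 (Bourbaki / Tauvel--Yu numbering, 0-based)\<close>

text \<open>Simple roots alpha_1..alpha_8 are indexed 0..7.  Dynkin diagram edges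
  (1-based): 1-3, 3-4, 2-4, 4-5, 5-6, 6-7, 7-8.\<close>

definition e8_edges :: "(nat \<times> nat) set" where
  "e8_edges = {(0,2),(2,3),(1,3),(3,4),(4,5),(5,6),(6,7)}"

definition cartan :: "nat \<Rightarrow> nat \<Rightarrow> int" where
  "cartan i j = (if i = j then 2 else if (i,j) \<in> e8_edges \<or> (j,i) \<in> e8_edges then -1 else 0)"

text \<open>Elements of the root lattice: integer coordinate vectors w.r.t. the simple roots.\<close>
definition rform :: "int list \<Rightarrow> int list \<Rightarrow> int" where
  "rform a b = (\<Sum>i<8. \<Sum>j<8. a!i * cartan i j * b!j)"

text \<open>For the simply laced type E8, the roots are exactly the lattice vectors of norm 2.\<close>
definition roots :: "int list set" where
  "roots = {a. length a = 8 \<and> rform a a = 2}"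

definition radd :: "int list \<Rightarrow> int list \<Rightarrow> int list" where
  "radd a b = map2 (+) a b"

definition rneg :: "int list \<Rightarrow> int list" where
  "rneg a = map uminus a"

definition posroots :: "int list set" where
  "posroots = {a \<in> roots. \<forall>i<8. a!i \<ge> 0}"

definition negroots :: "int list set" where
  "negroots = {a \<in> roots. \<forall>i<8. a!i \<le> 0}"

text \<open>R_S = Z S \<inter> R, for S a set of simple-root indices.\<close>
definition rootsub :: "nat set \<Rightarrow> int list set" where
  "rootsub S = {a \<in> roots. \<forall>i<8. i \<notin> S \<longrightarrow> a!i = 0}"

section \<open>The Lie algebra of type E8 (Kac's construction, Infinite-dim. Lie algebras 7.8)\<close>

text \<open>Sign cocycle: bimultiplicative, eps(a_i,a_j) = -1 iff i = j or (i < j and adjacent).\<close>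
definition eps :: "int list \<Rightarrow> int list \<Rightarrow> int" where
  "eps a b = (-1) ^ nat ((\<Sum>i<8. \<Sum>j<8.
      (if i = j \<or> (i < j \<and> cartan i j = -1) then a!i * b!j else 0)) mod 2)"

datatype idx = Hc nat | Er "int list"

text \<open>Basis: Hc i (i<8) is the coroot h_i = alpha_i of the Cartan subalgebra,
  Er a (a a root) is the root vector E_a.\<close>
definition basis :: "idx set" where
  "basis = Hc ` {..<8} \<union> Er ` roots"

definition gE8 :: "(idx \<Rightarrow> 'k::field) set" where
  "gE8 = {x. \<forall>c. c \<notin> basis \<longrightarrow> x c = 0}"

definition pair :: "nat \<Rightarrow> int list \<Rightarrow> int" where
  "pair i b = (\<Sum>j<8. cartan i j * b!j)"

text \<open>Structure constants: coefficient of c in [a, b] for basis vectors a, b.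
  [h,h'] = 0, [h,E_b] = (h|b) E_b, [E_a,E_-a] = -a, [E_a,E_b] = eps(a,b) E_(a+b)
  if a+b is a root, and 0 otherwise.\<close>
fun bb :: "idx \<Rightarrow> idx \<Rightarrow> idx \<Rightarrow> 'k::field" where
  "bb (Hc i) (Hc j) c = 0"
| "bb (Hc i) (Er b) c = (if c = Er b then of_int (pair i b) else 0)"
| "bb (Er a) (Hc j) c = (if c = Er a then - of_int (pair j a) else 0)"
| "bb (Er a) (Er b) c =
     (if b = rneg a then (case c of Hc i \<Rightarrow> (if i < 8 then - of_int (a!i) else 0) | Er _ \<Rightarrow> 0)
      else if radd a b \<in> roots then (if c = Er (radd a b) then of_int (eps a b) else 0)
      else 0)"

definition lbr :: "(idx \<Rightarrow> 'k::field) \<Rightarrow> (idx \<Rightarrow> 'k) \<Rightarrow> (idx \<Rightarrow> 'k)" where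
  "lbr x y = (\<lambda>c. \<Sum>a\<in>basis. \<Sum>b\<in>basis. x a * y b * bb a b c)"

section \<open>Parabolic and seaweed subalgebras\<close>

text \<open>h \<oplus> (sum of g_a, a \<in> A)\<close>
definition hspan :: "int list set \<Rightarrow> (idx \<Rightarrow> 'k::field) set" where
  "hspan A = {x \<in> gE8. \<forall>a \<in> roots. a \<notin> A \<longrightarrow> x (Er a) = 0}"

text \<open>sum of g_a, a \<in> A\<close>
definition rspan :: "int list set \<Rightarrow> (idx \<Rightarrow> 'k::field) set" where
  "rspan A = {x \<in> hspan A. \<forall>i<8. x (Hc i) = 0}"

definition pminus :: "nat set \<Rightarrow> (idx \<Rightarrow> 'k::field) set" where
  "pminus S = hspan (rootsub S \<union> negroots)"

definition pplus :: "nat set \<Rightarrow> (idx \<Rightarrow> 'k::field) set" where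
  "pplus T = hspan (rootsub T \<union> posroots)"

definition qST :: "nat set \<Rightarrow> nat set \<Rightarrow> (idx \<Rightarrow> 'k::field) set" where
  "qST S T = pminus S \<inter> pplus T"

definition RplusST :: "nat set \<Rightarrow> nat set \<Rightarrow> int list set" where
  "RplusST S T = (rootsub S \<inter> posroots) - rootsub (S \<inter> T)"

definition RminusST :: "nat set \<Rightarrow> nat set \<Rightarrow> int list set" where
  "RminusST S T = (rootsub T \<inter> negroots) - rootsub (S \<inter> T)"

definition nST :: "nat set \<Rightarrow> nat set \<Rightarrow> (idx \<Rightarrow> 'k::field) set" where
  "nST S T = rspan (RplusST S T \<union> RminusST S T)"

definition richardson :: "nat set \<Rightarrow> nat set \<Rightarrow> (idx \<Rightarrow> 'k::field) \<Rightarrow> bool" where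
  "richardson S T x \<longleftrightarrow> x \<in> nST S T \<and> lbr x ` qST S T = nST S T"

text \<open>The specific S = Pi - {alpha_8}, T = Pi - {alpha_4, alpha_5} (0-based indices).\<close>
definition S8 :: "nat set" where "S8 = {..<8} - {7}"
definition T8 :: "nat set" where "T8 = {..<8} - {3,4}"

end

theory Submission
  imports Defs "HOL-Analysis.Cartesian_Space"
begin

definition q60 :: "int list \<Rightarrow> int" where
 "q60 a = 2*(a!3)^2+30*(2*(a!1)-(a!3))^2+30*(2*(a!0)-(a!2))^2+10*(3*(a!2)-2*(a!3))^2+3*(5*(a!4)-4*(a!3))^2+5*(4*(a!5)-3*(a!4))^2+10*(3*(a!6)-2*(a!5))^2+30*(2*(a!7)-(a!6))^2"

lemma len8: "length a = 8 \<Longrightarrow> a = [a!0,a!1,a!2,a!3,a!4,a!5,a!6,a!7]"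
  by (simp add: list_eq_iff_nth_eq numeral_eq_Suc less_Suc_eq)

lemma rform_q60: assumes "length a = 8" shows "60 * rform a a = q60 a"
proof -
  obtain a0 a1 a2 a3 a4 a5 a6 a7 where a: "a = [a0,a1,a2,a3,a4,a5,a6,a7]" using len8[OF assms] by blast
  show ?thesis unfolding a rform_def q60_def cartan_def e8_edges_def
    by (simp add: numeral_eq_Suc lessThan_Suc algebra_simps power2_eq_square)
qed

definition cands :: "int list list" where
 "cands = [[a0,a1,a2,a3,a4,a5,a6,a7]. a3 \<leftarrow> [-7..7], a2 \<leftarrow> [(2*a3-1) div 3..(2*a3+3) div 3],
    2*a3^2+10*(3*a2-2*a3)^2 \<le> 120,
    a1 \<leftarrow> [(a3-1) div 2 .. (a3+2) div 2], 2*a3^2+10*(3*a2-2*a3)^2+30*(2*a1-a3)^2 \<le> 120,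
    a0 \<leftarrow> [(a2-1) div 2 .. (a2+2) div 2],  2*a3^2+10*(3*a2-2*a3)^2+30*(2*a1-a3)^2+30*(2*a0-a2)^2 \<le> 120,
    a4 \<leftarrow> [(4*a3-2) div 5 .. (4*a3+6) div 5],  2*a3^2+10*(3*a2-2*a3)^2+30*(2*a1-a3)^2+30*(2*a0-a2)^2+3*(5*a4-4*a3)^2 \<le> 120,
    a5 \<leftarrow> [(3*a4-1) div 4 .. (3*a4+4) div 4], 2*a3^2+10*(3*a2-2*a3)^2+30*(2*a1-a3)^2+30*(2*a0-a2)^2+3*(5*a4-4*a3)^2+5*(4*a5-3*a4)^2 \<le> 120,
    a6 \<leftarrow> [(2*a5-1) div 3 .. (2*a5+3) div 3], 2*a3^2+10*(3*a2-2*a3)^2+30*(2*a1-a3)^2+30*(2*a0-a2)^2+3*(5*a4-4*a3)^2+5*(4*a5-3*a4)^2+10*(3*a6-2*a5)^2 \<le> 120,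
    a7 \<leftarrow> [(a6-1) div 2 .. (a6+2) div 2], 2*a3^2+10*(3*a2-2*a3)^2+30*(2*a1-a3)^2+30*(2*a0-a2)^2+3*(5*a4-4*a3)^2+5*(4*a5-3*a4)^2+10*(3*a6-2*a5)^2+30*(2*a7-a6)^2 = 120]"

definition rootsL :: "int list list" where "rootsL = [[-2,-3,-4,-6,-5,-4,-3,-2], [-2,-3,-4,-6,-5,-4,-3,-1], [-2,-3,-4,-6,-5,-4,-2,-1], [-2,-3,-4,-6,-5,-3,-2,-1], [-2,-3,-4,-6,-4,-3,-2,-1], [-2,-3,-4,-5,-4,-3,-2,-1], [-2,-2,-4,-5,-4,-3,-2,-1], [-2,-3,-3,-5,-4,-3,-2,-1], [-1,-3,-3,-5,-4,-3,-2,-1], [-2,-2,-3,-5,-4,-3,-2,-1], [-1,-2,-3,-5,-4,-3,-2,-1], [-2,-2,-3,-4,-4,-3,-2,-1], [-2,-2,-3,-4,-3,-3,-2,-1], [-2,-2,-3,-4,-3,-2,-2,-1], [-2,-2,-3,-4,-3,-2,-1,-1], [-2,-2,-3,-4,-3,-2,-1,0], [-1,-2,-3,-4,-4,-3,-2,-1], [-1,-2,-3,-4,-3,-3,-2,-1], [-1,-2,-3,-4,-3,-2,-2,-1], [-1,-2,-3,-4,-3,-2,-1,-1], [-1,-2,-3,-4,-3,-2,-1,0], [-1,-2,-2,-4,-4,-3,-2,-1], [-1,-2,-2,-4,-3,-3,-2,-1], [-1,-2,-2,-4,-3,-2,-2,-1], [-1,-2,-2,-4,-3,-2,-1,-1],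 [-1,-2,-2,-4,-3,-2,-1,0], [-1,-2,-2,-3,-3,-3,-2,-1], [-1,-2,-2,-3,-3,-2,-2,-1], [-1,-2,-2,-3,-3,-2,-1,-1], [-1,-2,-2,-3,-3,-2,-1,0], [-1,-2,-2,-3,-2,-2,-2,-1], [-1,-2,-2,-3,-2,-2,-1,-1], [-1,-2,-2,-3,-2,-2,-1,0], [-1,-2,-2,-3,-2,-1,-1,-1], [-1,-2,-2,-3,-2,-1,-1,0], [-1,-2,-2,-3,-2,-1,0,0], [-1,-1,-2,-3,-3,-3,-2,-1], [-1,-1,-2,-3,-3,-2,-2,-1], [-1,-1,-2,-3,-3,-2,-1,-1], [-1,-1,-2,-3,-3,-2,-1,0], [-1,-1,-2,-3,-2,-2,-2,-1], [-1,-1,-2,-3,-2,-2,-1,-1], [-1,-1,-2,-3,-2,-2,-1,0], [-1,-1,-2,-3,-2,-1,-1,-1], [-1,-1,-2,-3,-2,-1,-1,0], [-1,-1,-2,-3,-2,-1,0,0], [-1,-1,-2,-2,-2,-2,-2,-1], [-1,-1,-2,-2,-2,-2,-1,-1], [-1,-1,-2,-2,-2,-2,-1,0], [-1,-1,-2,-2,-2,-1,-1,-1], [-1,-1,-2,-2,-2,-1,-1,0], [-1,-1,-2,-2,-2,-1,0,0], [-1,-1,-2,-2,-1,-1,-1,-1], [-1,-1,-2,-2,-1,-1,-1,0], [-1,-1,-2,-2,-1,-1,0,0], [-1,-1,-2,-2,-1,0,0,0], [-1,-1,-1,-2,-2,-2,-2,-1], [-1,-1,-1,-2,-2,-2,-1,-1],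 [-1,-1,-1,-2,-2,-2,-1,0], [-1,-1,-1,-2,-2,-1,-1,-1], [-1,-1,-1,-2,-2,-1,-1,0], [-1,-1,-1,-2,-2,-1,0,0], [-1,-1,-1,-2,-1,-1,-1,-1], [-1,-1,-1,-2,-1,-1,-1,0], [-1,-1,-1,-2,-1,-1,0,0], [-1,-1,-1,-2,-1,0,0,0], [0,-1,-1,-2,-2,-2,-2,-1], [0,-1,-1,-2,-2,-2,-1,-1], [0,-1,-1,-2,-2,-2,-1,0], [0,-1,-1,-2,-2,-1,-1,-1], [0,-1,-1,-2,-2,-1,-1,0], [0,-1,-1,-2,-2,-1,0,0], [0,-1,-1,-2,-1,-1,-1,-1], [0,-1,-1,-2,-1,-1,-1,0], [0,-1,-1,-2,-1,-1,0,0], [0,-1,-1,-2,-1,0,0,0], [-1,-1,-1,-1,-1,-1,-1,-1], [-1,-1,-1,-1,-1,-1,-1,0], [-1,-1,-1,-1,-1,-1,0,0], [-1,-1,-1,-1,-1,0,0,0], [-1,-1,-1,-1,0,0,0,0], [0,-1,-1,-1,-1,-1,-1,-1], [0,-1,-1,-1,-1,-1,-1,0], [0,-1,-1,-1,-1,-1,0,0], [0,-1,-1,-1,-1,0,0,0], [0,-1,-1,-1,0,0,0,0], [-1,0,-1,-1,-1,-1,-1,-1], [-1,0,-1,-1,-1,-1,-1,0], [-1,0,-1,-1,-1,-1,0,0], [-1,0,-1,-1,-1,0,0,0], [-1,0,-1,-1,0,0,0,0], [0,0,-1,-1,-1,-1,-1,-1], [0,0,-1,-1,-1,-1,-1,0],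 [0,0,-1,-1,-1,-1,0,0], [0,0,-1,-1,-1,0,0,0], [0,0,-1,-1,0,0,0,0], [0,-1,0,-1,-1,-1,-1,-1], [0,-1,0,-1,-1,-1,-1,0], [0,-1,0,-1,-1,-1,0,0], [0,-1,0,-1,-1,0,0,0], [0,-1,0,-1,0,0,0,0], [0,0,0,-1,-1,-1,-1,-1], [0,0,0,-1,-1,-1,-1,0], [0,0,0,-1,-1,-1,0,0], [0,0,0,-1,-1,0,0,0], [0,0,0,-1,0,0,0,0], [-1,0,-1,0,0,0,0,0], [0,0,-1,0,0,0,0,0], [0,-1,0,0,0,0,0,0], [-1,0,0,0,0,0,0,0], [0,0,0,0,-1,-1,-1,-1], [0,0,0,0,-1,-1,-1,0], [0,0,0,0,-1,-1,0,0], [0,0,0,0,-1,0,0,0], [0,0,0,0,0,-1,-1,-1], [0,0,0,0,0,-1,-1,0], [0,0,0,0,0,-1,0,0], [0,0,0,0,0,0,-1,-1], [0,0,0,0,0,0,-1,0], [0,0,0,0,0,0,0,-1], [0,0,0,0,0,0,0,1], [0,0,0,0,0,0,1,0], [0,0,0,0,0,0,1,1], [0,0,0,0,0,1,0,0], [0,0,0,0,0,1,1,0], [0,0,0,0,0,1,1,1], [0,0,0,0,1,0,0,0], [0,0,0,0,1,1,0,0], [0,0,0,0,1,1,1,0], [0,0,0,0,1,1,1,1], [1,0,0,0,0,0,0,0], [0,1,0,0,0,0,0,0], [0,0,1,0,0,0,0,0], [1,0,1,0,0,0,0,0], [0,0,0,1,0,0,0,0], [0,0,0,1,1,0,0,0],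 [0,0,0,1,1,1,0,0], [0,0,0,1,1,1,1,0], [0,0,0,1,1,1,1,1], [0,1,0,1,0,0,0,0], [0,1,0,1,1,0,0,0], [0,1,0,1,1,1,0,0], [0,1,0,1,1,1,1,0], [0,1,0,1,1,1,1,1], [0,0,1,1,0,0,0,0], [0,0,1,1,1,0,0,0], [0,0,1,1,1,1,0,0], [0,0,1,1,1,1,1,0], [0,0,1,1,1,1,1,1], [1,0,1,1,0,0,0,0], [1,0,1,1,1,0,0,0], [1,0,1,1,1,1,0,0], [1,0,1,1,1,1,1,0], [1,0,1,1,1,1,1,1], [0,1,1,1,0,0,0,0], [0,1,1,1,1,0,0,0], [0,1,1,1,1,1,0,0], [0,1,1,1,1,1,1,0], [0,1,1,1,1,1,1,1], [1,1,1,1,0,0,0,0], [1,1,1,1,1,0,0,0], [1,1,1,1,1,1,0,0], [1,1,1,1,1,1,1,0], [1,1,1,1,1,1,1,1], [0,1,1,2,1,0,0,0], [0,1,1,2,1,1,0,0], [0,1,1,2,1,1,1,0], [0,1,1,2,1,1,1,1], [0,1,1,2,2,1,0,0], [0,1,1,2,2,1,1,0], [0,1,1,2,2,1,1,1], [0,1,1,2,2,2,1,0], [0,1,1,2,2,2,1,1], [0,1,1,2,2,2,2,1], [1,1,1,2,1,0,0,0], [1,1,1,2,1,1,0,0], [1,1,1,2,1,1,1,0], [1,1,1,2,1,1,1,1], [1,1,1,2,2,1,0,0], [1,1,1,2,2,1,1,0], [1,1,1,2,2,1,1,1], [1,1,1,2,2,2,1,0], [1,1,1,2,2,2,1,1],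 [1,1,1,2,2,2,2,1], [1,1,2,2,1,0,0,0], [1,1,2,2,1,1,0,0], [1,1,2,2,1,1,1,0], [1,1,2,2,1,1,1,1], [1,1,2,2,2,1,0,0], [1,1,2,2,2,1,1,0], [1,1,2,2,2,1,1,1], [1,1,2,2,2,2,1,0], [1,1,2,2,2,2,1,1], [1,1,2,2,2,2,2,1], [1,1,2,3,2,1,0,0], [1,1,2,3,2,1,1,0], [1,1,2,3,2,1,1,1], [1,1,2,3,2,2,1,0], [1,1,2,3,2,2,1,1], [1,1,2,3,2,2,2,1], [1,1,2,3,3,2,1,0], [1,1,2,3,3,2,1,1], [1,1,2,3,3,2,2,1], [1,1,2,3,3,3,2,1], [1,2,2,3,2,1,0,0], [1,2,2,3,2,1,1,0], [1,2,2,3,2,1,1,1], [1,2,2,3,2,2,1,0], [1,2,2,3,2,2,1,1], [1,2,2,3,2,2,2,1], [1,2,2,3,3,2,1,0], [1,2,2,3,3,2,1,1], [1,2,2,3,3,2,2,1], [1,2,2,3,3,3,2,1], [1,2,2,4,3,2,1,0], [1,2,2,4,3,2,1,1], [1,2,2,4,3,2,2,1], [1,2,2,4,3,3,2,1], [1,2,2,4,4,3,2,1], [1,2,3,4,3,2,1,0], [1,2,3,4,3,2,1,1], [1,2,3,4,3,2,2,1], [1,2,3,4,3,3,2,1], [1,2,3,4,4,3,2,1], [2,2,3,4,3,2,1,0], [2,2,3,4,3,2,1,1], [2,2,3,4,3,2,2,1], [2,2,3,4,3,3,2,1], [2,2,3,4,4,3,2,1], [1,2,3,5,4,3,2,1],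 [2,2,3,5,4,3,2,1], [1,3,3,5,4,3,2,1], [2,3,3,5,4,3,2,1], [2,2,4,5,4,3,2,1], [2,3,4,5,4,3,2,1], [2,3,4,6,4,3,2,1], [2,3,4,6,5,3,2,1], [2,3,4,6,5,4,2,1], [2,3,4,6,5,4,3,1], [2,3,4,6,5,4,3,2]]"

lemma cands_eq: "cands = rootsL" unfolding cands_def rootsL_def by code_simp

lemma sq_bound: fixes t k :: int assumes "t^2 \<le> k" "k < (m+1)^2" "0 \<le> m" shows "-m \<le> t \<and> t \<le> m"
proof (rule ccontr)
  assume "\<not> ?thesis" then have "m+1 \<le> \<bar>t\<bar>" by linarith
  then have "(m+1)^2 \<le> \<bar>t\<bar>^2" using assms(3) by (intro power_mono) auto
  then show False using assms power2_abs[of t] by linarith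
qed

lemma ldiv: fixes n k d :: int assumes "0 < d" "d*k \<le> n" shows "k \<le> n div d"
proof -
  have "(d*k) div d \<le> n div d" using assms by (intro zdiv_mono1) auto
  then show ?thesis using assms by simp
qed

lemma udiv: fixes n k d :: int assumes "0 < d" "n < d*(k+1)" shows "n div d \<le> k"
proof -
  have "d * (n div d) \<le> n" using assms(1) by (metis div_mult_mod_eq le_add_same_cancel1 mult.commute pos_mod_sign)
  then have "d * (n div d) < d*(k+1)" using assms by linarith
  then have "n div d < k+1" using assms(1) by (simp add: mult_less_cancel_left_pos)
  then show ?thesis by simp
qed

lemma inupto: fixes n m k d :: int assumes "0 < d" "n < d*(k+1)" "d*k \<le> m" shows "k \<in> set [n div d .. m div d]"
  using udiv[OF assms(1,2)] ldiv[OF assms(1,3)] by (subst set_upto) simp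

lemma boundsQ: fixes A B C D E F G H :: int
  assumes "2*A + 10*B + 30*C + 30*D + 3*E + 5*F + 10*G + 30*H = 120" "0\<le>A" "0\<le>B" "0\<le>C" "0\<le>D" "0\<le>E" "0\<le>F" "0\<le>G" "0\<le>H"
  shows "A \<le> 60" "B \<le> 12" "C \<le> 4" "D \<le> 4" "E \<le> 40" "F \<le> 24" "G \<le> 12" "H \<le> 4"
   "2*A + 10*B \<le> 120" "2*A + 10*B + 30*C \<le> 120" "2*A + 10*B + 30*C + 30*D \<le> 120"
     "2*A + 10*B + 30*C + 30*D + 3*E \<le> 120" "2*A + 10*B + 30*C + 30*D + 3*E + 5*F \<le> 120"
     "2*A + 10*B + 30*C + 30*D + 3*E + 5*F + 10*G \<le> 120"
  using assms by - (linarith)+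

lemma roots_sub: assumes "a \<in> roots" shows "a \<in> set cands"
proof -
  have l: "length a = 8" and r: "rform a a = 2" using assms by (auto simp: roots_def)
  have q: "q60 a = 120" using rform_q60[OF l] r by simp
  obtain a0 a1 a2 a3 a4 a5 a6 a7 where a: "a = [a0,a1,a2,a3,a4,a5,a6,a7]" using len8[OF l] by blast
  have Q: "2*a3^2+10*(3*a2-2*a3)^2+30*(2*a1-a3)^2+30*(2*a0-a2)^2+3*(5*a4-4*a3)^2+5*(4*a5-3*a4)^2+10*(3*a6-2*a5)^2+30*(2*a7-a6)^2 = 120"
    using q unfolding a q60_def by simp
  have NN: "0 \<le> a3^2" "0 \<le> (3*a2-2*a3)^2" "0 \<le> (2*a1-a3)^2" "0 \<le> (2*a0-a2)^2" "0 \<le> (5*a4-4*a3)^2"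
     "0 \<le> (4*a5-3*a4)^2" "0 \<le> (3*a6-2*a5)^2" "0 \<le> (2*a7-a6)^2" by simp_all
  note bq = boundsQ[OF Q NN]
  have b3: "-7 \<le> a3 \<and> a3 \<le> 7" by (rule sq_bound[OF bq(1)]) simp_all
  have b2: "-3 \<le> 3*a2-2*a3 \<and> 3*a2-2*a3 \<le> 3" by (rule sq_bound[OF bq(2)]) simp_all
  have b1: "-2 \<le> 2*a1-a3 \<and> 2*a1-a3 \<le> 2" by (rule sq_bound[OF bq(3)]) simp_all
  have b0: "-2 \<le> 2*a0-a2 \<and> 2*a0-a2 \<le> 2" by (rule sq_bound[OF bq(4)]) simp_all
  have b4: "-6 \<le> 5*a4-4*a3 \<and> 5*a4-4*a3 \<le> 6" by (rule sq_bound[OF bq(5)]) simp_all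
  have b5: "-4 \<le> 4*a5-3*a4 \<and> 4*a5-3*a4 \<le> 4" by (rule sq_bound[OF bq(6)]) simp_all
  have b6: "-3 \<le> 3*a6-2*a5 \<and> 3*a6-2*a5 \<le> 3" by (rule sq_bound[OF bq(7)]) simp_all
  have b7: "-2 \<le> 2*a7-a6 \<and> 2*a7-a6 \<le> 2" by (rule sq_bound[OF bq(8)]) simp_all
  have r3: "a3 \<in> set [-7..7]" using b3 by (subst set_upto) simp
  have r2: "a2 \<in> set [(2*a3-1) div 3..(2*a3+3) div 3]" using b2 by (intro inupto) auto
  have r1: "a1 \<in> set [(a3-1) div 2 .. (a3+2) div 2]" using b1 by (intro inupto) auto
  have r0: "a0 \<in> set [(a2-1) div 2 .. (a2+2) div 2]" using b0 by (intro inupto) auto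
  have r4: "a4 \<in> set [(4*a3-2) div 5 .. (4*a3+6) div 5]" using b4 by (intro inupto) auto
  have r5: "a5 \<in> set [(3*a4-1) div 4 .. (3*a4+4) div 4]" using b5 by (intro inupto) auto
  have r6: "a6 \<in> set [(2*a5-1) div 3 .. (2*a5+3) div 3]" using b6 by (intro inupto) auto
  have r7: "a7 \<in> set [(a6-1) div 2 .. (a6+2) div 2]" using b7 by (intro inupto) auto
  have cm: "\<And>y xs x f. y \<in> set xs \<Longrightarrow> x \<in> set (f y) \<Longrightarrow> x \<in> set (concat (map f xs))" by auto
  have ci: "\<And>P x ys. P \<Longrightarrow> x \<in> set ys \<Longrightarrow> x \<in> set (if P then ys else [])" by auto
  have cs: "\<And>x. x \<in> set [x]" by simp
  note G = bq(9-14)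
  show ?thesis unfolding a cands_def
    apply (rule cm[OF r3], rule cm[OF r2], rule ci[OF G(1)])
    apply (rule cm[OF r1], rule ci[OF G(2)])
    apply (rule cm[OF r0], rule ci[OF G(3)])
    apply (rule cm[OF r4], rule ci[OF G(4)])
    apply (rule cm[OF r5], rule ci[OF G(5)])
    apply (rule cm[OF r6], rule ci[OF G(6)])
    apply (rule cm[OF r7], rule ci[OF Q])
    apply (rule cs)
    done
qed

lemma rootsL_prop: "list_all (\<lambda>a. length a = 8 \<and> q60 a = 120) rootsL"
  unfolding rootsL_def q60_def by code_simp

lemma roots_q60: "a \<in> roots \<longleftrightarrow> length a = 8 \<and> q60 a = 120"
proof
  assume "a \<in> roots"
  then have "length a = 8" "rform a a = 2" by (auto simp: roots_def)
  then show "length a = 8 \<and> q60 a = 120" using rform_q60[of a] by simp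
next
  assume "length a = 8 \<and> q60 a = 120" then show "a \<in> roots"
    using rform_q60[of a] by (auto simp: roots_def)
qed

lemma roots_eq: "roots = set rootsL"
proof
  show "roots \<subseteq> set rootsL" using roots_sub cands_eq by auto
  show "set rootsL \<subseteq> roots" using rootsL_prop by (auto simp: roots_q60 list_all_iff)
qed

lemma finite_roots: "finite roots" by (simp add: roots_eq)

lemma all8: "(\<forall>i<(8::nat). P i) \<longleftrightarrow> P 0 \<and> P 1 \<and> P 2 \<and> P 3 \<and> P 4 \<and> P 5 \<and> P 6 \<and> (P 7 :: bool)"
proof -
  have e: "{..<8::nat} = {0,1,2,3,4,5,6,7}" by auto
  have "(\<forall>i<(8::nat). P i) = (\<forall>i\<in>{..<8::nat}. P i)" by auto
  then show ?thesis unfolding e by simp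
qed

definition qcond :: "int list \<Rightarrow> bool" where
  "qcond a = ((a!7 = 0 \<or> (\<forall>i<8. a!i \<le> 0)) \<and> ((a!3 = 0 \<and> a!4 = 0) \<or> (\<forall>i<8. 0 \<le> a!i)))"

definition QL :: "int list list" where "QL = [[-1,0,-1,0,0,0,0,0], [0,0,-1,0,0,0,0,0], [0,-1,0,0,0,0,0,0], [-1,0,0,0,0,0,0,0], [0,0,0,0,0,-1,-1,-1], [0,0,0,0,0,-1,-1,0], [0,0,0,0,0,-1,0,0], [0,0,0,0,0,0,-1,-1], [0,0,0,0,0,0,-1,0], [0,0,0,0,0,0,0,-1], [0,0,0,0,0,0,1,0], [0,0,0,0,0,1,0,0], [0,0,0,0,0,1,1,0], [0,0,0,0,1,0,0,0], [0,0,0,0,1,1,0,0], [0,0,0,0,1,1,1,0], [1,0,0,0,0,0,0,0], [0,1,0,0,0,0,0,0], [0,0,1,0,0,0,0,0], [1,0,1,0,0,0,0,0], [0,0,0,1,0,0,0,0], [0,0,0,1,1,0,0,0], [0,0,0,1,1,1,0,0], [0,0,0,1,1,1,1,0], [0,1,0,1,0,0,0,0], [0,1,0,1,1,0,0,0], [0,1,0,1,1,1,0,0], [0,1,0,1,1,1,1,0], [0,0,1,1,0,0,0,0], [0,0,1,1,1,0,0,0], [0,0,1,1,1,1,0,0], [0,0,1,1,1,1,1,0], [1,0,1,1,0,0,0,0], [1,0,1,1,1,0,0,0], [1,0,1,1,1,1,0,0], [1,0,1,1,1,1,1,0], [0,1,1,1,0,0,0,0], [0,1,1,1,1,0,0,0],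 [0,1,1,1,1,1,0,0], [0,1,1,1,1,1,1,0], [1,1,1,1,0,0,0,0], [1,1,1,1,1,0,0,0], [1,1,1,1,1,1,0,0], [1,1,1,1,1,1,1,0], [0,1,1,2,1,0,0,0], [0,1,1,2,1,1,0,0], [0,1,1,2,1,1,1,0], [0,1,1,2,2,1,0,0], [0,1,1,2,2,1,1,0], [0,1,1,2,2,2,1,0], [1,1,1,2,1,0,0,0], [1,1,1,2,1,1,0,0], [1,1,1,2,1,1,1,0], [1,1,1,2,2,1,0,0], [1,1,1,2,2,1,1,0], [1,1,1,2,2,2,1,0], [1,1,2,2,1,0,0,0], [1,1,2,2,1,1,0,0], [1,1,2,2,1,1,1,0], [1,1,2,2,2,1,0,0], [1,1,2,2,2,1,1,0], [1,1,2,2,2,2,1,0], [1,1,2,3,2,1,0,0], [1,1,2,3,2,1,1,0], [1,1,2,3,2,2,1,0], [1,1,2,3,3,2,1,0], [1,2,2,3,2,1,0,0], [1,2,2,3,2,1,1,0], [1,2,2,3,2,2,1,0], [1,2,2,3,3,2,1,0], [1,2,2,4,3,2,1,0], [1,2,3,4,3,2,1,0], [2,2,3,4,3,2,1,0]]"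
definition RpL :: "int list list" where "RpL = [[0,0,0,0,1,0,0,0], [0,0,0,0,1,1,0,0], [0,0,0,0,1,1,1,0], [0,0,0,1,0,0,0,0], [0,0,0,1,1,0,0,0], [0,0,0,1,1,1,0,0], [0,0,0,1,1,1,1,0], [0,1,0,1,0,0,0,0], [0,1,0,1,1,0,0,0], [0,1,0,1,1,1,0,0], [0,1,0,1,1,1,1,0], [0,0,1,1,0,0,0,0], [0,0,1,1,1,0,0,0], [0,0,1,1,1,1,0,0], [0,0,1,1,1,1,1,0], [1,0,1,1,0,0,0,0], [1,0,1,1,1,0,0,0], [1,0,1,1,1,1,0,0], [1,0,1,1,1,1,1,0], [0,1,1,1,0,0,0,0], [0,1,1,1,1,0,0,0], [0,1,1,1,1,1,0,0], [0,1,1,1,1,1,1,0], [1,1,1,1,0,0,0,0], [1,1,1,1,1,0,0,0], [1,1,1,1,1,1,0,0], [1,1,1,1,1,1,1,0], [0,1,1,2,1,0,0,0], [0,1,1,2,1,1,0,0], [0,1,1,2,1,1,1,0], [0,1,1,2,2,1,0,0], [0,1,1,2,2,1,1,0], [0,1,1,2,2,2,1,0], [1,1,1,2,1,0,0,0], [1,1,1,2,1,1,0,0], [1,1,1,2,1,1,1,0], [1,1,1,2,2,1,0,0], [1,1,1,2,2,1,1,0], [1,1,1,2,2,2,1,0], [1,1,2,2,1,0,0,0], [1,1,2,2,1,1,0,0], [1,1,2,2,1,1,1,0], [1,1,2,2,2,1,0,0], [1,1,2,2,2,1,1,0], [1,1,2,2,2,2,1,0], [1,1,2,3,2,1,0,0],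 [1,1,2,3,2,1,1,0], [1,1,2,3,2,2,1,0], [1,1,2,3,3,2,1,0], [1,2,2,3,2,1,0,0], [1,2,2,3,2,1,1,0], [1,2,2,3,2,2,1,0], [1,2,2,3,3,2,1,0], [1,2,2,4,3,2,1,0], [1,2,3,4,3,2,1,0], [2,2,3,4,3,2,1,0]]"
definition RmL :: "int list list" where "RmL = [[0,0,0,0,0,-1,-1,-1], [0,0,0,0,0,0,-1,-1], [0,0,0,0,0,0,0,-1]]"
definition RnL :: "int list list" where "RnL = RpL @ RmL"

lemma S8_iff: "i < 8 \<Longrightarrow> i \<notin> S8 \<longleftrightarrow> i = 7" by (auto simp: S8_def)
lemma T8_iff: "i < 8 \<Longrightarrow> i \<notin> T8 \<longleftrightarrow> i = 3 \<or> i = 4" by (auto simp: T8_def)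
lemma ST8_iff: "i < 8 \<Longrightarrow> i \<notin> S8 \<inter> T8 \<longleftrightarrow> i = 3 \<or> i = 4 \<or> i = 7" by (auto simp: S8_def T8_def)

lemma rootsub_S8: "rootsub S8 = {a \<in> roots. a!7 = 0}"
  unfolding rootsub_def all8 S8_def by auto
lemma rootsub_T8: "rootsub T8 = {a \<in> roots. a!3 = 0 \<and> a!4 = 0}"
  unfolding rootsub_def all8 T8_def by auto
lemma rootsub_ST8: "rootsub (S8 \<inter> T8) = {a \<in> roots. a!3 = 0 \<and> a!4 = 0 \<and> a!7 = 0}"
  unfolding rootsub_def all8 S8_def T8_def by auto

lemma qset_eq: "(rootsub S8 \<union> negroots) \<inter> (rootsub T8 \<union> posroots) = {a \<in> roots. qcond a}"
  unfolding rootsub_S8 rootsub_T8 negroots_def posroots_def qcond_def by auto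

lemma QL_eq: "filter qcond rootsL = QL"
  unfolding QL_def rootsL_def qcond_def all8 by code_simp

lemma qset_QL: "(rootsub S8 \<union> negroots) \<inter> (rootsub T8 \<union> posroots) = set QL"
  unfolding qset_eq roots_eq QL_eq[symmetric] by auto

lemma RpL_eq: "filter (\<lambda>a. a!7 = 0 \<and> (\<forall>i<8. 0 \<le> a!i) \<and> \<not>(a!3 = 0 \<and> a!4 = 0 \<and> a!7 = 0)) rootsL = RpL"
  unfolding RpL_def rootsL_def all8 by code_simp
lemma RmL_eq: "filter (\<lambda>a. a!3 = 0 \<and> a!4 = 0 \<and> (\<forall>i<8. a!i \<le> 0) \<and> \<not>(a!3 = 0 \<and> a!4 = 0 \<and> a!7 = 0)) rootsL = RmL"
  unfolding RmL_def rootsL_def all8 by code_simp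

lemma Rplus_RpL: "RplusST S8 T8 = set RpL"
  unfolding RplusST_def rootsub_S8 rootsub_ST8 posroots_def RpL_eq[symmetric] roots_eq by auto
lemma Rminus_RmL: "RminusST S8 T8 = set RmL"
  unfolding RminusST_def rootsub_T8 rootsub_ST8 negroots_def RmL_eq[symmetric] roots_eq by auto

lemma dQL: "distinct QL" unfolding QL_def by code_simp
lemma dRpL: "distinct RpL" unfolding RpL_def by code_simp
lemma dRmL: "distinct RmL" unfolding RmL_def by code_simp
lemma dRnL: "distinct RnL" unfolding RnL_def RpL_def RmL_def by code_simp

lemma card_part: "card ((rootsub S8 \<union> negroots) \<inter> (rootsub T8 \<union> posroots)) + 8 = 81
    \<and> card (RplusST S8 T8) = 56 \<and> card (RminusST S8 T8) = 3"
proof -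
  have "length QL = 73" "length RpL = 56" "length RmL = 3" unfolding QL_def RpL_def RmL_def by simp_all
  then show ?thesis unfolding qset_QL Rplus_RpL Rminus_RmL
    using distinct_card[OF dQL] distinct_card[OF dRpL] distinct_card[OF dRmL] by simp
qed

definition rsub :: "int list \<Rightarrow> int list \<Rightarrow> int list" where "rsub r a = map2 (-) r a"

lemma RnL_roots: "set RnL \<subseteq> roots"
  using Rplus_RpL Rminus_RmL unfolding RnL_def RplusST_def RminusST_def rootsub_def by auto

lemma QL_roots: "set QL \<subseteq> roots"
  using qset_QL unfolding rootsub_def negroots_def posroots_def by auto

lemma nST_RnL: "nST S8 T8 = rspan (set RnL)"
  unfolding nST_def RnL_def using Rplus_RpL Rminus_RmL by simp

lemma finite_basis: "finite basis" unfolding basis_def using finite_roots by simp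

lemma nST_zero: assumes "x \<in> nST S8 T8" "c \<notin> Er ` set RnL" shows "x c = 0"
proof (cases c)
  case (Hc i)
  show ?thesis
  proof (cases "i < 8")
    case True then show ?thesis using assms Hc unfolding nST_RnL rspan_def by auto
  next
    case False then have "c \<notin> basis" using Hc unfolding basis_def by auto
    then show ?thesis using assms unfolding nST_RnL rspan_def hspan_def gE8_def by auto
  qed
next
  case (Er a)
  show ?thesis
  proof (cases "a \<in> roots")
    case True then show ?thesis using assms Er unfolding nST_RnL rspan_def hspan_def by auto
  next
    case False then have "c \<notin> basis" using Er unfolding basis_def by auto
    then show ?thesis using assms unfolding nST_RnL rspan_def hspan_def gE8_def by auto
  qed
qed

lemma lbr_restrict: assumes "x \<in> nST S8 T8"
  shows "lbr x z c = (\<Sum>a\<in>set RnL. x (Er a) * (\<Sum>b\<in>basis. z b * bb (Er a) b c))"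
proof -
  have sub: "Er ` set RnL \<subseteq> basis" using RnL_roots unfolding basis_def by auto
  have "lbr x z c = (\<Sum>a\<in>basis. \<Sum>b\<in>basis. x a * z b * bb a b c)" unfolding lbr_def ..
  also have "\<dots> = (\<Sum>a\<in>Er ` set RnL. \<Sum>b\<in>basis. x a * z b * bb a b c)"
    by (rule sum.mono_neutral_right[OF finite_basis sub]) (use nST_zero[OF assms] in auto)
  also have "\<dots> = (\<Sum>a\<in>set RnL. \<Sum>b\<in>basis. x (Er a) * z b * bb (Er a) b c)"
    by (subst sum.reindex) (auto simp: inj_on_def)
  also have "\<dots> = (\<Sum>a\<in>set RnL. x (Er a) * (\<Sum>b\<in>basis. z b * bb (Er a) b c))"
    by (simp add: sum_distrib_left mult.assoc)
  finally show ?thesis .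
qed

lemma len_roots: "a \<in> roots \<Longrightarrow> length a = 8" by (simp add: roots_def)

lemma radd_iff: assumes "length a = 8" "length b = 8" "length r = 8"
  shows "radd a b = r \<longleftrightarrow> b = rsub r a"
  using assms unfolding radd_def rsub_def by (auto simp: list_eq_iff_nth_eq)

lemma zero_not_root: "replicate 8 0 \<notin> roots"
  by (simp add: roots_q60 q60_def)

lemma radd_neg: assumes "length a = 8" shows "radd a (rneg a) = replicate 8 0"
  using assms unfolding radd_def rneg_def by (auto simp: list_eq_iff_nth_eq)

lemma bb_ErEr: assumes "a \<in> roots" "b \<in> roots" "r \<in> roots"
  shows "bb (Er a) (Er b) (Er r) = (if b = rsub r a then of_int (eps a b) else 0)"
proof -
  have l: "length a = 8" "length b = 8" "length r = 8" using assms len_roots by auto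
  show ?thesis
  proof (cases "b = rneg a")
    case True
    then have "radd a b \<noteq> r" using radd_neg[OF l(1)] zero_not_root assms(3) by auto
    then have "b \<noteq> rsub r a" using radd_iff[OF l] by simp
    then show ?thesis using True by simp
  next
    case False
    show ?thesis
    proof (cases "b = rsub r a")
      case True
      then have "radd a b = r" using radd_iff[OF l] by simp
      then show ?thesis using False True assms(3) by simp
    next
      case F2: False
      then have "radd a b \<noteq> r" using radd_iff[OF l] by simp
      then show ?thesis using False F2 by simp
    qed
  qed
qed

lemma inner_sum: assumes "a \<in> roots" "r \<in> roots"
  shows "(\<Sum>b\<in>basis. z b * bb (Er a) b (Er r)) =
    (if a = r then - (\<Sum>i<8. z (Hc i) * of_int (pair i r)) else 0) +
    (if rsub r a \<in> roots then z (Er (rsub r a)) * of_int (eps a (rsub r a)) else 0)"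
proof -
  have d: "Hc ` {..<8} \<inter> Er ` roots = {}" by auto
  have "(\<Sum>b\<in>basis. z b * bb (Er a) b (Er r)) =
     (\<Sum>b\<in>Hc ` {..<8}. z b * bb (Er a) b (Er r)) + (\<Sum>b\<in>Er ` roots. z b * bb (Er a) b (Er r))"
    unfolding basis_def by (rule sum.union_disjoint) (use finite_roots d in auto)
  also have "(\<Sum>b\<in>Hc ` {..<8}. z b * bb (Er a) b (Er r)) = (\<Sum>i<8. z (Hc i) * bb (Er a) (Hc i) (Er r))"
    by (subst sum.reindex) (auto simp: inj_on_def)
  also have "\<dots> = (if a = r then - (\<Sum>i<8. z (Hc i) * of_int (pair i r)) else 0)"
    by (auto simp: sum_negf)
  also have "(\<Sum>b\<in>Er ` roots. z b * bb (Er a) b (Er r)) = (\<Sum>b\<in>roots. z (Er b) * bb (Er a) (Er b) (Er r))"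
    by (subst sum.reindex) (auto simp: inj_on_def)
  also have "\<dots> = (\<Sum>b\<in>roots. if b = rsub r a then z (Er b) * of_int (eps a b) else 0)"
  proof (rule sum.cong[OF refl])
    fix b assume "b \<in> roots"
    show "z (Er b) * bb (Er a) (Er b) (Er r) = (if b = rsub r a then z (Er b) * of_int (eps a b) else 0)"
      unfolding bb_ErEr[OF assms(1) \<open>b \<in> roots\<close> assms(2)] by simp
  qed
  also have "\<dots> = (if rsub r a \<in> roots then z (Er (rsub r a)) * of_int (eps a (rsub r a)) else 0)"
    by (simp add: sum.delta finite_roots)
  finally show ?thesis .
qed

lemma lbr_formula: assumes "x \<in> nST S8 T8" "r \<in> roots"
  shows "lbr x z (Er r) = (\<Sum>a\<in>set RnL. x (Er a) *
    ((if a = r then - (\<Sum>i<8. z (Hc i) * of_int (pair i r)) else 0) +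
    (if rsub r a \<in> roots then z (Er (rsub r a)) * of_int (eps a (rsub r a)) else 0)))"
  unfolding lbr_restrict[OF assms(1)]
proof (rule sum.cong[OF refl])
  fix a assume "a \<in> set RnL"
  then have "a \<in> roots" using RnL_roots by auto
  then show "x (Er a) * (\<Sum>b\<in>basis. z b * bb (Er a) b (Er r)) = x (Er a) *
    ((if a = r then - (\<Sum>i<8. z (Hc i) * of_int (pair i r)) else 0) +
    (if rsub r a \<in> roots then z (Er (rsub r a)) * of_int (eps a (rsub r a)) else 0))"
    using inner_sum[OF _ assms(2), of a z] by simp
qed

definition qsupp :: "(idx \<Rightarrow> 'k::field) \<Rightarrow> bool" where
  "qsupp z \<longleftrightarrow> (\<forall>b. b \<notin> set QL \<longrightarrow> z (Er b) = 0)"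

lemma lbr_formulaQ: assumes "x \<in> nST S8 T8" "r \<in> roots" "qsupp z"
  shows "lbr x z (Er r) = (\<Sum>a\<in>set RnL. x (Er a) *
    ((if a = r then - (\<Sum>i<8. z (Hc i) * of_int (pair i r)) else 0) +
    (if rsub r a \<in> set QL then z (Er (rsub r a)) * of_int (eps a (rsub r a)) else 0)))"
  unfolding lbr_formula[OF assms(1,2)]
  by (rule sum.cong) (use assms(3) QL_roots in \<open>auto simp: qsupp_def\<close>)

lemma lbr_formulaL: assumes "x \<in> nST S8 T8" "r \<in> roots" "qsupp z"
  shows "lbr x z (Er r) = sum_list (map (\<lambda>a. x (Er a) *
    ((if a = r then - (\<Sum>i<8. z (Hc i) * of_int (pair i r)) else 0) +
    (if rsub r a \<in> set QL then z (Er (rsub r a)) * of_int (eps a (rsub r a)) else 0))) RnL)"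
  unfolding lbr_formulaQ[OF assms] by (rule sum.distinct_set_conv_list[OF dRnL])

lemma qST_eq: "qST S8 T8 = hspan (set QL)"
  unfolding qST_def pminus_def pplus_def qset_QL[symmetric] hspan_def by auto

lemma qST_qsupp: "y \<in> qST S8 T8 \<Longrightarrow> qsupp y"
  unfolding qST_eq hspan_def gE8_def qsupp_def basis_def by auto

definition qmem :: "int list \<Rightarrow> bool" where
  "qmem b \<longleftrightarrow> length b = 8 \<and> q60 b = 120 \<and> (b!7 = 0 \<or> list_all (\<lambda>t. t \<le> 0) b) \<and> ((b!3 = 0 \<and> b!4 = 0) \<or> list_all (\<lambda>t. 0 \<le> t) b)"

lemma list_all8: "length b = 8 \<Longrightarrow> list_all P b \<longleftrightarrow> (\<forall>i<8. P (b!i))"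
  by (simp add: list_all_length)

lemma QL_mem: "b \<in> set QL \<longleftrightarrow> qmem b"
proof -
  have "b \<in> set QL \<longleftrightarrow> b \<in> roots \<and> qcond b" using qset_QL qset_eq by blast
  also have "\<dots> \<longleftrightarrow> qmem b" unfolding roots_q60 qmem_def qcond_def by (auto simp: list_all8)
  finally show ?thesis .
qed

lemma sum_if_filter: assumes "distinct L"
  shows "(\<Sum>a\<in>set L. if P a then g a else 0) = sum_list (map g (filter P L))"
proof -
  have "(\<Sum>a\<in>set L. if P a then g a else 0) = (\<Sum>a\<in>set L \<inter> {a. P a}. g a)"
    by (simp add: sum.inter_restrict)
  also have "set L \<inter> {a. P a} = set (filter P L)" by auto
  also have "(\<Sum>a\<in>set (filter P L). g a) = sum_list (map g (filter P L))"
    by (rule sum.distinct_set_conv_list) (use assms in simp)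
  finally show ?thesis .
qed

lemma lbr_split: assumes "x \<in> nST S8 T8" "r \<in> roots" "qsupp z"
  shows "lbr x z (Er r) = (if r \<in> set RnL then - (x (Er r) * (\<Sum>i<8. z (Hc i) * of_int (pair i r))) else 0)
     + sum_list (map (\<lambda>a. x (Er a) * (z (Er (rsub r a)) * of_int (eps a (rsub r a)))) (filter (\<lambda>a. qmem (rsub r a)) RnL))"
proof -
  have "lbr x z (Er r) = (\<Sum>a\<in>set RnL. (if a = r then - (x (Er a) * (\<Sum>i<8. z (Hc i) * of_int (pair i r))) else 0)
     + (if qmem (rsub r a) then x (Er a) * (z (Er (rsub r a)) * of_int (eps a (rsub r a))) else 0))"
    unfolding lbr_formulaQ[OF assms] QL_mem by (rule sum.cong) (auto simp: algebra_simps)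
  also have "\<dots> = (\<Sum>a\<in>set RnL. (if a = r then - (x (Er a) * (\<Sum>i<8. z (Hc i) * of_int (pair i r))) else 0))
     + (\<Sum>a\<in>set RnL. (if qmem (rsub r a) then x (Er a) * (z (Er (rsub r a)) * of_int (eps a (rsub r a))) else 0))"
    by (rule sum.distrib)
  also have "(\<Sum>a\<in>set RnL. (if a = r then - (x (Er a) * (\<Sum>i<8. z (Hc i) * of_int (pair i r))) else 0))
     = (if r \<in> set RnL then - (x (Er r) * (\<Sum>i<8. z (Hc i) * of_int (pair i r))) else 0)"
    by (simp add: sum.delta')
  also have "(\<Sum>a\<in>set RnL. (if qmem (rsub r a) then x (Er a) * (z (Er (rsub r a)) * of_int (eps a (rsub r a))) else 0))
    = sum_list (map (\<lambda>a. x (Er a) * (z (Er (rsub r a)) * of_int (eps a (rsub r a)))) (filter (\<lambda>a. qmem (rsub r a)) RnL))"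
    by (rule sum_if_filter[OF dRnL])
  finally show ?thesis .
qed

lemma qmem_len: "qmem b \<Longrightarrow> length b = 8" by (simp add: qmem_def)

lemma sum8_list: "(\<Sum>i<8. g i) = sum_list (map g [0..<8])"
proof -
  have "(\<Sum>i<8. g i) = (\<Sum>i\<in>set [0..<8]. g i)" by (simp add: atLeast0LessThan)
  also have "\<dots> = sum_list (map g [0..<8])" by (rule sum.distinct_set_conv_list) simp
  finally show ?thesis .
qed

lemma lbr_tab: assumes "x \<in> nST S8 T8" "r \<in> roots" "qsupp z"
  and "map (\<lambda>a. (a, rsub r a, eps a (rsub r a))) (filter (\<lambda>a. qmem (rsub r a)) RnL) = T"
  and "map (\<lambda>i. (i, pair i r)) [0..<8] = PP"
  shows "lbr x z (Er r) = (if r \<in> set RnL then - (x (Er r) * sum_list (map (\<lambda>(i,p). z (Hc i) * of_int p) PP)) else 0)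
     + sum_list (map (\<lambda>(a,b,e). x (Er a) * (z (Er b) * of_int e)) T)"
proof -
  have 1: "(\<Sum>i<8. z (Hc i) * of_int (pair i r)) = sum_list (map (\<lambda>(i,p). z (Hc i) * of_int p) PP)"
    unfolding sum8_list assms(5)[symmetric] by (simp add: o_def)
  have 2: "map (\<lambda>a. x (Er a) * (z (Er (rsub r a)) * of_int (eps a (rsub r a)))) (filter (\<lambda>a. qmem (rsub r a)) RnL)
     = map (\<lambda>(a,b,e). x (Er a) * (z (Er b) * of_int e)) T"
    unfolding assms(4)[symmetric] by (simp add: o_def)
  show ?thesis unfolding lbr_split[OF assms(1-3)] 1 2 ..
qed

definition AWL :: "int list list" where "AWL = [[0,0,0,1,0,0,0,0], [0,1,0,1,0,0,0,0], [0,0,1,1,0,0,0,0], [1,0,1,1,0,0,0,0], [0,1,1,1,0,0,0,0], [1,1,1,1,0,0,0,0], [0,0,0,0,1,0,0,0], [0,0,0,0,1,1,0,0], [0,0,0,0,1,1,1,0]]"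
definition outL :: "int list list" where "outL = [[0,0,0,0,0,-1,-1,-1], [0,0,0,0,0,0,-1,-1], [0,0,0,0,0,0,0,-1], [0,0,0,1,0,0,0,0], [0,1,0,1,0,0,0,0], [0,0,1,1,0,0,0,0], [1,0,1,1,0,0,0,0], [0,1,1,1,0,0,0,0], [1,1,1,1,0,0,0,0], [0,0,0,0,1,0,0,0], [0,0,0,0,1,1,0,0], [0,0,0,0,1,1,1,0], [0,0,0,1,1,0,0,0], [0,0,0,1,1,1,0,0], [0,0,0,1,1,1,1,0], [0,1,0,1,1,0,0,0], [0,1,0,1,1,1,0,0], [0,1,0,1,1,1,1,0], [0,0,1,1,1,0,0,0], [0,0,1,1,1,1,0,0], [0,0,1,1,1,1,1,0], [1,0,1,1,1,0,0,0], [1,0,1,1,1,1,0,0], [1,0,1,1,1,1,1,0], [0,1,1,1,1,0,0,0], [0,1,1,1,1,1,0,0], [0,1,1,1,1,1,1,0], [1,1,1,1,1,0,0,0], [1,1,1,1,1,1,0,0], [1,1,1,1,1,1,1,0]]"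
definition k1 :: "(idx \<Rightarrow> 'k::field) \<Rightarrow> idx \<Rightarrow> 'k" where
  "k1 x c = (case c of Hc i \<Rightarrow> 0 | Er b \<Rightarrow> if b \<in> set AWL then x (Er b) else 0)"
definition k2 :: "(idx \<Rightarrow> 'k::field) \<Rightarrow> 'k \<Rightarrow> 'k \<Rightarrow> 'k \<Rightarrow> idx \<Rightarrow> 'k" where
  "k2 x c1 c2 c3 c = (case c of Hc i \<Rightarrow> (if i = 5 then -(x (Er [0,0,0,0,1,0,0,0])*c1) else if i = 6 then x (Er [0,0,0,0,1,1,1,0])*c3 else 0)
    | Er b \<Rightarrow> (if b = [0,0,0,0,0,1,0,0] then x (Er [0,0,0,0,1,1,0,0])*c1
     else if b = [0,0,0,0,0,0,1,0] then x (Er [0,0,0,0,1,1,1,0])*c2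
     else if b = [0,0,0,0,0,1,1,0] then x (Er [0,0,0,0,1,1,1,0])*c1
     else if b = [0,0,0,0,0,-1,0,0] then -(x (Er [0,0,0,0,1,0,0,0])*c2)
     else if b = [0,0,0,0,0,0,-1,0] then -(x (Er [0,0,0,0,1,1,0,0])*c3)
     else if b = [0,0,0,0,0,-1,-1,0] then -(x (Er [0,0,0,0,1,0,0,0])*c3)
     else if b = [0,0,0,1,0,0,0,0] then c1*x (Er [0,0,0,1,1,0,0,0]) + c2*x (Er [0,0,0,1,1,1,0,0]) + c3*x (Er [0,0,0,1,1,1,1,0])
     else if b = [0,1,0,1,0,0,0,0] then c1*x (Er [0,1,0,1,1,0,0,0]) + c2*x (Er [0,1,0,1,1,1,0,0]) + c3*x (Er [0,1,0,1,1,1,1,0])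
     else if b = [0,0,1,1,0,0,0,0] then c1*x (Er [0,0,1,1,1,0,0,0]) + c2*x (Er [0,0,1,1,1,1,0,0]) + c3*x (Er [0,0,1,1,1,1,1,0])
     else if b = [1,0,1,1,0,0,0,0] then c1*x (Er [1,0,1,1,1,0,0,0]) + c2*x (Er [1,0,1,1,1,1,0,0]) + c3*x (Er [1,0,1,1,1,1,1,0])
     else if b = [0,1,1,1,0,0,0,0] then c1*x (Er [0,1,1,1,1,0,0,0]) + c2*x (Er [0,1,1,1,1,1,0,0]) + c3*x (Er [0,1,1,1,1,1,1,0])
     else if b = [1,1,1,1,0,0,0,0] then c1*x (Er [1,1,1,1,1,0,0,0]) + c2*x (Er [1,1,1,1,1,1,0,0]) + c3*x (Er [1,1,1,1,1,1,1,0])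
     else 0))"

lemma k1_qsupp: "qsupp (k1 x)"
proof -
  have "set AWL \<subseteq> set QL" unfolding AWL_def QL_def by simp
  then show ?thesis unfolding qsupp_def k1_def by auto
qed
lemma tab_0: "map (\<lambda>a. (a, rsub [0,0,0,0,0,-1,-1,-1] a, eps a (rsub [0,0,0,0,0,-1,-1,-1] a))) (filter (\<lambda>a. qmem (rsub [0,0,0,0,0,-1,-1,-1] a)) RnL) = [([0,0,0,0,0,0,-1,-1], [0,0,0,0,0,-1,0,0], 1), ([0,0,0,0,0,0,0,-1], [0,0,0,0,0,-1,-1,0], 1)]"
  unfolding RnL_def RpL_def RmL_def qmem_def q60_def rsub_def eps_def cartan_def e8_edges_def by code_simp
lemma ptab_0: "map (\<lambda>i. (i, pair i [0,0,0,0,0,-1,-1,-1])) [0..<8] = [(0, 0), (1, 0), (2, 0), (3, 0), (4, 1), (5, -1), (6, 0), (7, -1)]"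
  unfolding pair_def cartan_def e8_edges_def by code_simp

lemma tab_1: "map (\<lambda>a. (a, rsub [0,0,0,0,0,0,-1,-1] a, eps a (rsub [0,0,0,0,0,0,-1,-1] a))) (filter (\<lambda>a. qmem (rsub [0,0,0,0,0,0,-1,-1] a)) RnL) = [([0,0,0,0,0,-1,-1,-1], [0,0,0,0,0,1,0,0], -1), ([0,0,0,0,0,0,0,-1], [0,0,0,0,0,0,-1,0], 1)]"
  unfolding RnL_def RpL_def RmL_def qmem_def q60_def rsub_def eps_def cartan_def e8_edges_def by code_simp
lemma ptab_1: "map (\<lambda>i. (i, pair i [0,0,0,0,0,0,-1,-1])) [0..<8] = [(0, 0), (1, 0), (2, 0), (3, 0), (4, 0), (5, 1), (6, -1), (7, -1)]"
  unfolding pair_def cartan_def e8_edges_def by code_simp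

lemma tab_2: "map (\<lambda>a. (a, rsub [0,0,0,0,0,0,0,-1] a, eps a (rsub [0,0,0,0,0,0,0,-1] a))) (filter (\<lambda>a. qmem (rsub [0,0,0,0,0,0,0,-1] a)) RnL) = [([0,0,0,0,0,-1,-1,-1], [0,0,0,0,0,1,1,0], -1), ([0,0,0,0,0,0,-1,-1], [0,0,0,0,0,0,1,0], -1)]"
  unfolding RnL_def RpL_def RmL_def qmem_def q60_def rsub_def eps_def cartan_def e8_edges_def by code_simp
lemma ptab_2: "map (\<lambda>i. (i, pair i [0,0,0,0,0,0,0,-1])) [0..<8] = [(0, 0), (1, 0), (2, 0), (3, 0), (4, 0), (5, 0), (6, 1), (7, -2)]"
  unfolding pair_def cartan_def e8_edges_def by code_simp

lemma tab_3: "map (\<lambda>a. (a, rsub [0,0,0,1,0,0,0,0] a, eps a (rsub [0,0,0,1,0,0,0,0] a))) (filter (\<lambda>a. qmem (rsub [0,0,0,1,0,0,0,0] a)) RnL) = [([0,1,0,1,0,0,0,0], [0,-1,0,0,0,0,0,0], -1), ([0,0,1,1,0,0,0,0], [0,0,-1,0,0,0,0,0], -1), ([1,0,1,1,0,0,0,0], [-1,0,-1,0,0,0,0,0], -1)]"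
  unfolding RnL_def RpL_def RmL_def qmem_def q60_def rsub_def eps_def cartan_def e8_edges_def by code_simp
lemma ptab_3: "map (\<lambda>i. (i, pair i [0,0,0,1,0,0,0,0])) [0..<8] = [(0, 0), (1, -1), (2, -1), (3, 2), (4, -1), (5, 0), (6, 0), (7, 0)]"
  unfolding pair_def cartan_def e8_edges_def by code_simp

lemma tab_4: "map (\<lambda>a. (a, rsub [0,1,0,1,0,0,0,0] a, eps a (rsub [0,1,0,1,0,0,0,0] a))) (filter (\<lambda>a. qmem (rsub [0,1,0,1,0,0,0,0] a)) RnL) = [([0,0,0,1,0,0,0,0], [0,1,0,0,0,0,0,0], 1), ([0,1,1,1,0,0,0,0], [0,0,-1,0,0,0,0,0], -1), ([1,1,1,1,0,0,0,0], [-1,0,-1,0,0,0,0,0], -1)]"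
  unfolding RnL_def RpL_def RmL_def qmem_def q60_def rsub_def eps_def cartan_def e8_edges_def by code_simp
lemma ptab_4: "map (\<lambda>i. (i, pair i [0,1,0,1,0,0,0,0])) [0..<8] = [(0, 0), (1, 1), (2, -1), (3, 1), (4, -1), (5, 0), (6, 0), (7, 0)]"
  unfolding pair_def cartan_def e8_edges_def by code_simp

lemma tab_5: "map (\<lambda>a. (a, rsub [0,0,1,1,0,0,0,0] a, eps a (rsub [0,0,1,1,0,0,0,0] a))) (filter (\<lambda>a. qmem (rsub [0,0,1,1,0,0,0,0] a)) RnL) = [([0,0,0,1,0,0,0,0], [0,0,1,0,0,0,0,0], 1), ([1,0,1,1,0,0,0,0], [-1,0,0,0,0,0,0,0], -1), ([0,1,1,1,0,0,0,0], [0,-1,0,0,0,0,0,0], -1)]"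
  unfolding RnL_def RpL_def RmL_def qmem_def q60_def rsub_def eps_def cartan_def e8_edges_def by code_simp
lemma ptab_5: "map (\<lambda>i. (i, pair i [0,0,1,1,0,0,0,0])) [0..<8] = [(0, -1), (1, -1), (2, 1), (3, 1), (4, -1), (5, 0), (6, 0), (7, 0)]"
  unfolding pair_def cartan_def e8_edges_def by code_simp

lemma tab_6: "map (\<lambda>a. (a, rsub [1,0,1,1,0,0,0,0] a, eps a (rsub [1,0,1,1,0,0,0,0] a))) (filter (\<lambda>a. qmem (rsub [1,0,1,1,0,0,0,0] a)) RnL) = [([0,0,0,1,0,0,0,0], [1,0,1,0,0,0,0,0], 1), ([0,0,1,1,0,0,0,0], [1,0,0,0,0,0,0,0], 1), ([1,1,1,1,0,0,0,0], [0,-1,0,0,0,0,0,0], -1)]"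
  unfolding RnL_def RpL_def RmL_def qmem_def q60_def rsub_def eps_def cartan_def e8_edges_def by code_simp
lemma ptab_6: "map (\<lambda>i. (i, pair i [1,0,1,1,0,0,0,0])) [0..<8] = [(0, 1), (1, -1), (2, 0), (3, 1), (4, -1), (5, 0), (6, 0), (7, 0)]"
  unfolding pair_def cartan_def e8_edges_def by code_simp

lemma tab_7: "map (\<lambda>a. (a, rsub [0,1,1,1,0,0,0,0] a, eps a (rsub [0,1,1,1,0,0,0,0] a))) (filter (\<lambda>a. qmem (rsub [0,1,1,1,0,0,0,0] a)) RnL) = [([0,1,0,1,0,0,0,0], [0,0,1,0,0,0,0,0], 1), ([0,0,1,1,0,0,0,0], [0,1,0,0,0,0,0,0], 1), ([1,1,1,1,0,0,0,0], [-1,0,0,0,0,0,0,0], -1)]"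
  unfolding RnL_def RpL_def RmL_def qmem_def q60_def rsub_def eps_def cartan_def e8_edges_def by code_simp
lemma ptab_7: "map (\<lambda>i. (i, pair i [0,1,1,1,0,0,0,0])) [0..<8] = [(0, -1), (1, 1), (2, 1), (3, 0), (4, -1), (5, 0), (6, 0), (7, 0)]"
  unfolding pair_def cartan_def e8_edges_def by code_simp

lemma tab_8: "map (\<lambda>a. (a, rsub [1,1,1,1,0,0,0,0] a, eps a (rsub [1,1,1,1,0,0,0,0] a))) (filter (\<lambda>a. qmem (rsub [1,1,1,1,0,0,0,0] a)) RnL) = [([0,1,0,1,0,0,0,0], [1,0,1,0,0,0,0,0], 1), ([1,0,1,1,0,0,0,0], [0,1,0,0,0,0,0,0], 1), ([0,1,1,1,0,0,0,0], [1,0,0,0,0,0,0,0], 1)]"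
  unfolding RnL_def RpL_def RmL_def qmem_def q60_def rsub_def eps_def cartan_def e8_edges_def by code_simp
lemma ptab_8: "map (\<lambda>i. (i, pair i [1,1,1,1,0,0,0,0])) [0..<8] = [(0, 1), (1, 1), (2, 0), (3, 0), (4, -1), (5, 0), (6, 0), (7, 0)]"
  unfolding pair_def cartan_def e8_edges_def by code_simp

lemma tab_9: "map (\<lambda>a. (a, rsub [0,0,0,0,1,0,0,0] a, eps a (rsub [0,0,0,0,1,0,0,0] a))) (filter (\<lambda>a. qmem (rsub [0,0,0,0,1,0,0,0] a)) RnL) = [([0,0,0,0,1,1,0,0], [0,0,0,0,0,-1,0,0], 1), ([0,0,0,0,1,1,1,0], [0,0,0,0,0,-1,-1,0], 1)]"
  unfolding RnL_def RpL_def RmL_def qmem_def q60_def rsub_def eps_def cartan_def e8_edges_def by code_simp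
lemma ptab_9: "map (\<lambda>i. (i, pair i [0,0,0,0,1,0,0,0])) [0..<8] = [(0, 0), (1, 0), (2, 0), (3, -1), (4, 2), (5, -1), (6, 0), (7, 0)]"
  unfolding pair_def cartan_def e8_edges_def by code_simp

lemma tab_10: "map (\<lambda>a. (a, rsub [0,0,0,0,1,1,0,0] a, eps a (rsub [0,0,0,0,1,1,0,0] a))) (filter (\<lambda>a. qmem (rsub [0,0,0,0,1,1,0,0] a)) RnL) = [([0,0,0,0,1,0,0,0], [0,0,0,0,0,1,0,0], -1), ([0,0,0,0,1,1,1,0], [0,0,0,0,0,0,-1,0], 1)]"
  unfolding RnL_def RpL_def RmL_def qmem_def q60_def rsub_def eps_def cartan_def e8_edges_def by code_simp
lemma ptab_10: "map (\<lambda>i. (i, pair i [0,0,0,0,1,1,0,0])) [0..<8] = [(0, 0), (1, 0), (2, 0), (3, -1), (4, 1), (5, 1), (6, -1), (7, 0)]"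
  unfolding pair_def cartan_def e8_edges_def by code_simp

lemma tab_11: "map (\<lambda>a. (a, rsub [0,0,0,0,1,1,1,0] a, eps a (rsub [0,0,0,0,1,1,1,0] a))) (filter (\<lambda>a. qmem (rsub [0,0,0,0,1,1,1,0] a)) RnL) = [([0,0,0,0,1,0,0,0], [0,0,0,0,0,1,1,0], -1), ([0,0,0,0,1,1,0,0], [0,0,0,0,0,0,1,0], -1)]"
  unfolding RnL_def RpL_def RmL_def qmem_def q60_def rsub_def eps_def cartan_def e8_edges_def by code_simp
lemma ptab_11: "map (\<lambda>i. (i, pair i [0,0,0,0,1,1,1,0])) [0..<8] = [(0, 0), (1, 0), (2, 0), (3, -1), (4, 1), (5, 0), (6, 1), (7, -1)]"
  unfolding pair_def cartan_def e8_edges_def by code_simp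

lemma tab_12: "map (\<lambda>a. (a, rsub [0,0,0,1,1,0,0,0] a, eps a (rsub [0,0,0,1,1,0,0,0] a))) (filter (\<lambda>a. qmem (rsub [0,0,0,1,1,0,0,0] a)) RnL) = [([0,0,0,0,1,0,0,0], [0,0,0,1,0,0,0,0], 1), ([0,0,0,1,0,0,0,0], [0,0,0,0,1,0,0,0], -1), ([0,0,0,1,1,1,0,0], [0,0,0,0,0,-1,0,0], 1), ([0,0,0,1,1,1,1,0], [0,0,0,0,0,-1,-1,0], 1), ([0,1,0,1,1,0,0,0], [0,-1,0,0,0,0,0,0], -1), ([0,0,1,1,1,0,0,0], [0,0,-1,0,0,0,0,0], -1), ([1,0,1,1,1,0,0,0], [-1,0,-1,0,0,0,0,0], -1)]"
  unfolding RnL_def RpL_def RmL_def qmem_def q60_def rsub_def eps_def cartan_def e8_edges_def by code_simp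
lemma ptab_12: "map (\<lambda>i. (i, pair i [0,0,0,1,1,0,0,0])) [0..<8] = [(0, 0), (1, -1), (2, -1), (3, 1), (4, 1), (5, -1), (6, 0), (7, 0)]"
  unfolding pair_def cartan_def e8_edges_def by code_simp

lemma tab_13: "map (\<lambda>a. (a, rsub [0,0,0,1,1,1,0,0] a, eps a (rsub [0,0,0,1,1,1,0,0] a))) (filter (\<lambda>a. qmem (rsub [0,0,0,1,1,1,0,0] a)) RnL) = [([0,0,0,0,1,1,0,0], [0,0,0,1,0,0,0,0], 1), ([0,0,0,1,0,0,0,0], [0,0,0,0,1,1,0,0], -1), ([0,0,0,1,1,0,0,0], [0,0,0,0,0,1,0,0], -1), ([0,0,0,1,1,1,1,0], [0,0,0,0,0,0,-1,0], 1), ([0,1,0,1,1,1,0,0], [0,-1,0,0,0,0,0,0], -1), ([0,0,1,1,1,1,0,0], [0,0,-1,0,0,0,0,0], -1), ([1,0,1,1,1,1,0,0], [-1,0,-1,0,0,0,0,0], -1)]"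
  unfolding RnL_def RpL_def RmL_def qmem_def q60_def rsub_def eps_def cartan_def e8_edges_def by code_simp
lemma ptab_13: "map (\<lambda>i. (i, pair i [0,0,0,1,1,1,0,0])) [0..<8] = [(0, 0), (1, -1), (2, -1), (3, 1), (4, 0), (5, 1), (6, -1), (7, 0)]"
  unfolding pair_def cartan_def e8_edges_def by code_simp

lemma tab_14: "map (\<lambda>a. (a, rsub [0,0,0,1,1,1,1,0] a, eps a (rsub [0,0,0,1,1,1,1,0] a))) (filter (\<lambda>a. qmem (rsub [0,0,0,1,1,1,1,0] a)) RnL) = [([0,0,0,0,1,1,1,0], [0,0,0,1,0,0,0,0], 1), ([0,0,0,1,0,0,0,0], [0,0,0,0,1,1,1,0], -1), ([0,0,0,1,1,0,0,0], [0,0,0,0,0,1,1,0], -1), ([0,0,0,1,1,1,0,0], [0,0,0,0,0,0,1,0], -1), ([0,1,0,1,1,1,1,0], [0,-1,0,0,0,0,0,0], -1), ([0,0,1,1,1,1,1,0], [0,0,-1,0,0,0,0,0], -1), ([1,0,1,1,1,1,1,0], [-1,0,-1,0,0,0,0,0], -1)]"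
  unfolding RnL_def RpL_def RmL_def qmem_def q60_def rsub_def eps_def cartan_def e8_edges_def by code_simp
lemma ptab_14: "map (\<lambda>i. (i, pair i [0,0,0,1,1,1,1,0])) [0..<8] = [(0, 0), (1, -1), (2, -1), (3, 1), (4, 0), (5, 0), (6, 1), (7, -1)]"
  unfolding pair_def cartan_def e8_edges_def by code_simp

lemma tab_15: "map (\<lambda>a. (a, rsub [0,1,0,1,1,0,0,0] a, eps a (rsub [0,1,0,1,1,0,0,0] a))) (filter (\<lambda>a. qmem (rsub [0,1,0,1,1,0,0,0] a)) RnL) = [([0,0,0,0,1,0,0,0], [0,1,0,1,0,0,0,0], 1), ([0,0,0,1,1,0,0,0], [0,1,0,0,0,0,0,0], 1), ([0,1,0,1,0,0,0,0], [0,0,0,0,1,0,0,0], -1), ([0,1,0,1,1,1,0,0], [0,0,0,0,0,-1,0,0], 1), ([0,1,0,1,1,1,1,0], [0,0,0,0,0,-1,-1,0], 1), ([0,1,1,1,1,0,0,0], [0,0,-1,0,0,0,0,0], -1), ([1,1,1,1,1,0,0,0], [-1,0,-1,0,0,0,0,0], -1)]"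
  unfolding RnL_def RpL_def RmL_def qmem_def q60_def rsub_def eps_def cartan_def e8_edges_def by code_simp
lemma ptab_15: "map (\<lambda>i. (i, pair i [0,1,0,1,1,0,0,0])) [0..<8] = [(0, 0), (1, 1), (2, -1), (3, 0), (4, 1), (5, -1), (6, 0), (7, 0)]"
  unfolding pair_def cartan_def e8_edges_def by code_simp

lemma tab_16: "map (\<lambda>a. (a, rsub [0,1,0,1,1,1,0,0] a, eps a (rsub [0,1,0,1,1,1,0,0] a))) (filter (\<lambda>a. qmem (rsub [0,1,0,1,1,1,0,0] a)) RnL) = [([0,0,0,0,1,1,0,0], [0,1,0,1,0,0,0,0], 1), ([0,0,0,1,1,1,0,0], [0,1,0,0,0,0,0,0], 1), ([0,1,0,1,0,0,0,0], [0,0,0,0,1,1,0,0], -1), ([0,1,0,1,1,0,0,0], [0,0,0,0,0,1,0,0], -1), ([0,1,0,1,1,1,1,0], [0,0,0,0,0,0,-1,0], 1), ([0,1,1,1,1,1,0,0], [0,0,-1,0,0,0,0,0], -1), ([1,1,1,1,1,1,0,0], [-1,0,-1,0,0,0,0,0], -1)]"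
  unfolding RnL_def RpL_def RmL_def qmem_def q60_def rsub_def eps_def cartan_def e8_edges_def by code_simp
lemma ptab_16: "map (\<lambda>i. (i, pair i [0,1,0,1,1,1,0,0])) [0..<8] = [(0, 0), (1, 1), (2, -1), (3, 0), (4, 0), (5, 1), (6, -1), (7, 0)]"
  unfolding pair_def cartan_def e8_edges_def by code_simp

lemma tab_17: "map (\<lambda>a. (a, rsub [0,1,0,1,1,1,1,0] a, eps a (rsub [0,1,0,1,1,1,1,0] a))) (filter (\<lambda>a. qmem (rsub [0,1,0,1,1,1,1,0] a)) RnL) = [([0,0,0,0,1,1,1,0], [0,1,0,1,0,0,0,0], 1), ([0,0,0,1,1,1,1,0], [0,1,0,0,0,0,0,0], 1), ([0,1,0,1,0,0,0,0], [0,0,0,0,1,1,1,0], -1), ([0,1,0,1,1,0,0,0], [0,0,0,0,0,1,1,0], -1), ([0,1,0,1,1,1,0,0], [0,0,0,0,0,0,1,0], -1), ([0,1,1,1,1,1,1,0], [0,0,-1,0,0,0,0,0], -1), ([1,1,1,1,1,1,1,0], [-1,0,-1,0,0,0,0,0], -1)]"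
  unfolding RnL_def RpL_def RmL_def qmem_def q60_def rsub_def eps_def cartan_def e8_edges_def by code_simp
lemma ptab_17: "map (\<lambda>i. (i, pair i [0,1,0,1,1,1,1,0])) [0..<8] = [(0, 0), (1, 1), (2, -1), (3, 0), (4, 0), (5, 0), (6, 1), (7, -1)]"
  unfolding pair_def cartan_def e8_edges_def by code_simp

lemma tab_18: "map (\<lambda>a. (a, rsub [0,0,1,1,1,0,0,0] a, eps a (rsub [0,0,1,1,1,0,0,0] a))) (filter (\<lambda>a. qmem (rsub [0,0,1,1,1,0,0,0] a)) RnL) = [([0,0,0,0,1,0,0,0], [0,0,1,1,0,0,0,0], 1), ([0,0,0,1,1,0,0,0], [0,0,1,0,0,0,0,0], 1), ([0,0,1,1,0,0,0,0], [0,0,0,0,1,0,0,0], -1), ([0,0,1,1,1,1,0,0], [0,0,0,0,0,-1,0,0], 1), ([0,0,1,1,1,1,1,0], [0,0,0,0,0,-1,-1,0], 1), ([1,0,1,1,1,0,0,0], [-1,0,0,0,0,0,0,0], -1), ([0,1,1,1,1,0,0,0], [0,-1,0,0,0,0,0,0], -1)]"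
  unfolding RnL_def RpL_def RmL_def qmem_def q60_def rsub_def eps_def cartan_def e8_edges_def by code_simp
lemma ptab_18: "map (\<lambda>i. (i, pair i [0,0,1,1,1,0,0,0])) [0..<8] = [(0, -1), (1, -1), (2, 1), (3, 0), (4, 1), (5, -1), (6, 0), (7, 0)]"
  unfolding pair_def cartan_def e8_edges_def by code_simp

lemma tab_19: "map (\<lambda>a. (a, rsub [0,0,1,1,1,1,0,0] a, eps a (rsub [0,0,1,1,1,1,0,0] a))) (filter (\<lambda>a. qmem (rsub [0,0,1,1,1,1,0,0] a)) RnL) = [([0,0,0,0,1,1,0,0], [0,0,1,1,0,0,0,0], 1), ([0,0,0,1,1,1,0,0], [0,0,1,0,0,0,0,0], 1), ([0,0,1,1,0,0,0,0], [0,0,0,0,1,1,0,0], -1), ([0,0,1,1,1,0,0,0], [0,0,0,0,0,1,0,0], -1), ([0,0,1,1,1,1,1,0], [0,0,0,0,0,0,-1,0], 1), ([1,0,1,1,1,1,0,0], [-1,0,0,0,0,0,0,0], -1), ([0,1,1,1,1,1,0,0], [0,-1,0,0,0,0,0,0], -1)]"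
  unfolding RnL_def RpL_def RmL_def qmem_def q60_def rsub_def eps_def cartan_def e8_edges_def by code_simp
lemma ptab_19: "map (\<lambda>i. (i, pair i [0,0,1,1,1,1,0,0])) [0..<8] = [(0, -1), (1, -1), (2, 1), (3, 0), (4, 0), (5, 1), (6, -1), (7, 0)]"
  unfolding pair_def cartan_def e8_edges_def by code_simp

lemma tab_20: "map (\<lambda>a. (a, rsub [0,0,1,1,1,1,1,0] a, eps a (rsub [0,0,1,1,1,1,1,0] a))) (filter (\<lambda>a. qmem (rsub [0,0,1,1,1,1,1,0] a)) RnL) = [([0,0,0,0,1,1,1,0], [0,0,1,1,0,0,0,0], 1), ([0,0,0,1,1,1,1,0], [0,0,1,0,0,0,0,0], 1), ([0,0,1,1,0,0,0,0], [0,0,0,0,1,1,1,0], -1), ([0,0,1,1,1,0,0,0], [0,0,0,0,0,1,1,0], -1), ([0,0,1,1,1,1,0,0], [0,0,0,0,0,0,1,0], -1), ([1,0,1,1,1,1,1,0], [-1,0,0,0,0,0,0,0], -1), ([0,1,1,1,1,1,1,0], [0,-1,0,0,0,0,0,0], -1)]"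
  unfolding RnL_def RpL_def RmL_def qmem_def q60_def rsub_def eps_def cartan_def e8_edges_def by code_simp
lemma ptab_20: "map (\<lambda>i. (i, pair i [0,0,1,1,1,1,1,0])) [0..<8] = [(0, -1), (1, -1), (2, 1), (3, 0), (4, 0), (5, 0), (6, 1), (7, -1)]"
  unfolding pair_def cartan_def e8_edges_def by code_simp

lemma tab_21: "map (\<lambda>a. (a, rsub [1,0,1,1,1,0,0,0] a, eps a (rsub [1,0,1,1,1,0,0,0] a))) (filter (\<lambda>a. qmem (rsub [1,0,1,1,1,0,0,0] a)) RnL) = [([0,0,0,0,1,0,0,0], [1,0,1,1,0,0,0,0], 1), ([0,0,0,1,1,0,0,0], [1,0,1,0,0,0,0,0], 1), ([0,0,1,1,1,0,0,0], [1,0,0,0,0,0,0,0], 1), ([1,0,1,1,0,0,0,0], [0,0,0,0,1,0,0,0], -1), ([1,0,1,1,1,1,0,0], [0,0,0,0,0,-1,0,0], 1), ([1,0,1,1,1,1,1,0], [0,0,0,0,0,-1,-1,0], 1), ([1,1,1,1,1,0,0,0], [0,-1,0,0,0,0,0,0], -1)]"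
  unfolding RnL_def RpL_def RmL_def qmem_def q60_def rsub_def eps_def cartan_def e8_edges_def by code_simp
lemma ptab_21: "map (\<lambda>i. (i, pair i [1,0,1,1,1,0,0,0])) [0..<8] = [(0, 1), (1, -1), (2, 0), (3, 0), (4, 1), (5, -1), (6, 0), (7, 0)]"
  unfolding pair_def cartan_def e8_edges_def by code_simp

lemma tab_22: "map (\<lambda>a. (a, rsub [1,0,1,1,1,1,0,0] a, eps a (rsub [1,0,1,1,1,1,0,0] a))) (filter (\<lambda>a. qmem (rsub [1,0,1,1,1,1,0,0] a)) RnL) = [([0,0,0,0,1,1,0,0], [1,0,1,1,0,0,0,0], 1), ([0,0,0,1,1,1,0,0], [1,0,1,0,0,0,0,0], 1), ([0,0,1,1,1,1,0,0], [1,0,0,0,0,0,0,0], 1), ([1,0,1,1,0,0,0,0], [0,0,0,0,1,1,0,0], -1), ([1,0,1,1,1,0,0,0], [0,0,0,0,0,1,0,0], -1), ([1,0,1,1,1,1,1,0], [0,0,0,0,0,0,-1,0], 1), ([1,1,1,1,1,1,0,0], [0,-1,0,0,0,0,0,0], -1)]"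
  unfolding RnL_def RpL_def RmL_def qmem_def q60_def rsub_def eps_def cartan_def e8_edges_def by code_simp
lemma ptab_22: "map (\<lambda>i. (i, pair i [1,0,1,1,1,1,0,0])) [0..<8] = [(0, 1), (1, -1), (2, 0), (3, 0), (4, 0), (5, 1), (6, -1), (7, 0)]"
  unfolding pair_def cartan_def e8_edges_def by code_simp

lemma tab_23: "map (\<lambda>a. (a, rsub [1,0,1,1,1,1,1,0] a, eps a (rsub [1,0,1,1,1,1,1,0] a))) (filter (\<lambda>a. qmem (rsub [1,0,1,1,1,1,1,0] a)) RnL) = [([0,0,0,0,1,1,1,0], [1,0,1,1,0,0,0,0], 1), ([0,0,0,1,1,1,1,0], [1,0,1,0,0,0,0,0], 1), ([0,0,1,1,1,1,1,0], [1,0,0,0,0,0,0,0], 1), ([1,0,1,1,0,0,0,0], [0,0,0,0,1,1,1,0], -1), ([1,0,1,1,1,0,0,0], [0,0,0,0,0,1,1,0], -1), ([1,0,1,1,1,1,0,0], [0,0,0,0,0,0,1,0], -1), ([1,1,1,1,1,1,1,0], [0,-1,0,0,0,0,0,0], -1)]"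
  unfolding RnL_def RpL_def RmL_def qmem_def q60_def rsub_def eps_def cartan_def e8_edges_def by code_simp
lemma ptab_23: "map (\<lambda>i. (i, pair i [1,0,1,1,1,1,1,0])) [0..<8] = [(0, 1), (1, -1), (2, 0), (3, 0), (4, 0), (5, 0), (6, 1), (7, -1)]"
  unfolding pair_def cartan_def e8_edges_def by code_simp

lemma tab_24: "map (\<lambda>a. (a, rsub [0,1,1,1,1,0,0,0] a, eps a (rsub [0,1,1,1,1,0,0,0] a))) (filter (\<lambda>a. qmem (rsub [0,1,1,1,1,0,0,0] a)) RnL) = [([0,0,0,0,1,0,0,0], [0,1,1,1,0,0,0,0], 1), ([0,1,0,1,1,0,0,0], [0,0,1,0,0,0,0,0], 1), ([0,0,1,1,1,0,0,0], [0,1,0,0,0,0,0,0], 1), ([0,1,1,1,0,0,0,0], [0,0,0,0,1,0,0,0], -1), ([0,1,1,1,1,1,0,0], [0,0,0,0,0,-1,0,0], 1), ([0,1,1,1,1,1,1,0], [0,0,0,0,0,-1,-1,0], 1), ([1,1,1,1,1,0,0,0], [-1,0,0,0,0,0,0,0], -1)]"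
  unfolding RnL_def RpL_def RmL_def qmem_def q60_def rsub_def eps_def cartan_def e8_edges_def by code_simp
lemma ptab_24: "map (\<lambda>i. (i, pair i [0,1,1,1,1,0,0,0])) [0..<8] = [(0, -1), (1, 1), (2, 1), (3, -1), (4, 1), (5, -1), (6, 0), (7, 0)]"
  unfolding pair_def cartan_def e8_edges_def by code_simp

lemma tab_25: "map (\<lambda>a. (a, rsub [0,1,1,1,1,1,0,0] a, eps a (rsub [0,1,1,1,1,1,0,0] a))) (filter (\<lambda>a. qmem (rsub [0,1,1,1,1,1,0,0] a)) RnL) = [([0,0,0,0,1,1,0,0], [0,1,1,1,0,0,0,0], 1), ([0,1,0,1,1,1,0,0], [0,0,1,0,0,0,0,0], 1), ([0,0,1,1,1,1,0,0], [0,1,0,0,0,0,0,0], 1), ([0,1,1,1,0,0,0,0], [0,0,0,0,1,1,0,0], -1), ([0,1,1,1,1,0,0,0], [0,0,0,0,0,1,0,0], -1), ([0,1,1,1,1,1,1,0], [0,0,0,0,0,0,-1,0], 1), ([1,1,1,1,1,1,0,0], [-1,0,0,0,0,0,0,0], -1)]"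
  unfolding RnL_def RpL_def RmL_def qmem_def q60_def rsub_def eps_def cartan_def e8_edges_def by code_simp
lemma ptab_25: "map (\<lambda>i. (i, pair i [0,1,1,1,1,1,0,0])) [0..<8] = [(0, -1), (1, 1), (2, 1), (3, -1), (4, 0), (5, 1), (6, -1), (7, 0)]"
  unfolding pair_def cartan_def e8_edges_def by code_simp

lemma tab_26: "map (\<lambda>a. (a, rsub [0,1,1,1,1,1,1,0] a, eps a (rsub [0,1,1,1,1,1,1,0] a))) (filter (\<lambda>a. qmem (rsub [0,1,1,1,1,1,1,0] a)) RnL) = [([0,0,0,0,1,1,1,0], [0,1,1,1,0,0,0,0], 1), ([0,1,0,1,1,1,1,0], [0,0,1,0,0,0,0,0], 1), ([0,0,1,1,1,1,1,0], [0,1,0,0,0,0,0,0], 1), ([0,1,1,1,0,0,0,0], [0,0,0,0,1,1,1,0], -1), ([0,1,1,1,1,0,0,0], [0,0,0,0,0,1,1,0], -1), ([0,1,1,1,1,1,0,0], [0,0,0,0,0,0,1,0], -1), ([1,1,1,1,1,1,1,0], [-1,0,0,0,0,0,0,0], -1)]"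
  unfolding RnL_def RpL_def RmL_def qmem_def q60_def rsub_def eps_def cartan_def e8_edges_def by code_simp
lemma ptab_26: "map (\<lambda>i. (i, pair i [0,1,1,1,1,1,1,0])) [0..<8] = [(0, -1), (1, 1), (2, 1), (3, -1), (4, 0), (5, 0), (6, 1), (7, -1)]"
  unfolding pair_def cartan_def e8_edges_def by code_simp

lemma tab_27: "map (\<lambda>a. (a, rsub [1,1,1,1,1,0,0,0] a, eps a (rsub [1,1,1,1,1,0,0,0] a))) (filter (\<lambda>a. qmem (rsub [1,1,1,1,1,0,0,0] a)) RnL) = [([0,0,0,0,1,0,0,0], [1,1,1,1,0,0,0,0], 1), ([0,1,0,1,1,0,0,0], [1,0,1,0,0,0,0,0], 1), ([1,0,1,1,1,0,0,0], [0,1,0,0,0,0,0,0], 1), ([0,1,1,1,1,0,0,0], [1,0,0,0,0,0,0,0], 1), ([1,1,1,1,0,0,0,0], [0,0,0,0,1,0,0,0], -1), ([1,1,1,1,1,1,0,0], [0,0,0,0,0,-1,0,0], 1), ([1,1,1,1,1,1,1,0], [0,0,0,0,0,-1,-1,0], 1)]"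
  unfolding RnL_def RpL_def RmL_def qmem_def q60_def rsub_def eps_def cartan_def e8_edges_def by code_simp
lemma ptab_27: "map (\<lambda>i. (i, pair i [1,1,1,1,1,0,0,0])) [0..<8] = [(0, 1), (1, 1), (2, 0), (3, -1), (4, 1), (5, -1), (6, 0), (7, 0)]"
  unfolding pair_def cartan_def e8_edges_def by code_simp

lemma tab_28: "map (\<lambda>a. (a, rsub [1,1,1,1,1,1,0,0] a, eps a (rsub [1,1,1,1,1,1,0,0] a))) (filter (\<lambda>a. qmem (rsub [1,1,1,1,1,1,0,0] a)) RnL) = [([0,0,0,0,1,1,0,0], [1,1,1,1,0,0,0,0], 1), ([0,1,0,1,1,1,0,0], [1,0,1,0,0,0,0,0], 1), ([1,0,1,1,1,1,0,0], [0,1,0,0,0,0,0,0], 1), ([0,1,1,1,1,1,0,0], [1,0,0,0,0,0,0,0], 1), ([1,1,1,1,0,0,0,0], [0,0,0,0,1,1,0,0], -1), ([1,1,1,1,1,0,0,0], [0,0,0,0,0,1,0,0], -1), ([1,1,1,1,1,1,1,0], [0,0,0,0,0,0,-1,0], 1)]"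
  unfolding RnL_def RpL_def RmL_def qmem_def q60_def rsub_def eps_def cartan_def e8_edges_def by code_simp
lemma ptab_28: "map (\<lambda>i. (i, pair i [1,1,1,1,1,1,0,0])) [0..<8] = [(0, 1), (1, 1), (2, 0), (3, -1), (4, 0), (5, 1), (6, -1), (7, 0)]"
  unfolding pair_def cartan_def e8_edges_def by code_simp

lemma tab_29: "map (\<lambda>a. (a, rsub [1,1,1,1,1,1,1,0] a, eps a (rsub [1,1,1,1,1,1,1,0] a))) (filter (\<lambda>a. qmem (rsub [1,1,1,1,1,1,1,0] a)) RnL) = [([0,0,0,0,1,1,1,0], [1,1,1,1,0,0,0,0], 1), ([0,1,0,1,1,1,1,0], [1,0,1,0,0,0,0,0], 1), ([1,0,1,1,1,1,1,0], [0,1,0,0,0,0,0,0], 1), ([0,1,1,1,1,1,1,0], [1,0,0,0,0,0,0,0], 1), ([1,1,1,1,0,0,0,0], [0,0,0,0,1,1,1,0], -1), ([1,1,1,1,1,0,0,0], [0,0,0,0,0,1,1,0], -1), ([1,1,1,1,1,1,0,0], [0,0,0,0,0,0,1,0], -1)]"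
  unfolding RnL_def RpL_def RmL_def qmem_def q60_def rsub_def eps_def cartan_def e8_edges_def by code_simp
lemma ptab_29: "map (\<lambda>i. (i, pair i [1,1,1,1,1,1,1,0])) [0..<8] = [(0, 1), (1, 1), (2, 0), (3, -1), (4, 0), (5, 0), (6, 1), (7, -1)]"
  unfolding pair_def cartan_def e8_edges_def by code_simp
lemma kz_0: assumes "x \<in> nST S8 T8" "qsupp (k2 x c1 c2 c3)" "c1 * x (Er [0,0,0,0,1,0,0,0]) + c2 * x (Er [0,0,0,0,1,1,0,0]) + c3 * x (Er [0,0,0,0,1,1,1,0]) = 0" "c1 * x (Er [0,0,0,0,0,-1,-1,-1]) + c2 * x (Er [0,0,0,0,0,0,-1,-1]) + c3 * x (Er [0,0,0,0,0,0,0,-1]) = 0"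
  shows "lbr x (k1 x) (Er [0,0,0,0,0,-1,-1,-1]) = 0 \<and> lbr x (k2 x c1 c2 c3) (Er [0,0,0,0,0,-1,-1,-1]) = 0"
proof -
  have r: "[0,0,0,0,0,-1,-1,-1] \<in> roots" by (simp add: roots_q60 q60_def)
  have a: "lbr x (k1 x) (Er [0,0,0,0,0,-1,-1,-1]) = 0" unfolding lbr_tab[OF assms(1) r k1_qsupp tab_0 ptab_0]
    by (simp add: RnL_def RpL_def RmL_def k1_def AWL_def algebra_simps)
  have b: "lbr x (k2 x c1 c2 c3) (Er [0,0,0,0,0,-1,-1,-1]) = (- (x (Er [0,0,0,0,1,0,0,0]))) * (c1 * x (Er [0,0,0,0,0,-1,-1,-1]) + c2 * x (Er [0,0,0,0,0,0,-1,-1]) + c3 * x (Er [0,0,0,0,0,0,0,-1]))" unfolding lbr_tab[OF assms(1) r assms(2) tab_0 ptab_0]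
    by (simp add: RnL_def RpL_def RmL_def k2_def algebra_simps)
  show ?thesis using a b assms(3,4) by simp
qed

lemma kz_1: assumes "x \<in> nST S8 T8" "qsupp (k2 x c1 c2 c3)" "c1 * x (Er [0,0,0,0,1,0,0,0]) + c2 * x (Er [0,0,0,0,1,1,0,0]) + c3 * x (Er [0,0,0,0,1,1,1,0]) = 0" "c1 * x (Er [0,0,0,0,0,-1,-1,-1]) + c2 * x (Er [0,0,0,0,0,0,-1,-1]) + c3 * x (Er [0,0,0,0,0,0,0,-1]) = 0"
  shows "lbr x (k1 x) (Er [0,0,0,0,0,0,-1,-1]) = 0 \<and> lbr x (k2 x c1 c2 c3) (Er [0,0,0,0,0,0,-1,-1]) = 0"
proof -
  have r: "[0,0,0,0,0,0,-1,-1] \<in> roots" by (simp add: roots_q60 q60_def)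
  have a: "lbr x (k1 x) (Er [0,0,0,0,0,0,-1,-1]) = 0" unfolding lbr_tab[OF assms(1) r k1_qsupp tab_1 ptab_1]
    by (simp add: RnL_def RpL_def RmL_def k1_def AWL_def algebra_simps)
  have b: "lbr x (k2 x c1 c2 c3) (Er [0,0,0,0,0,0,-1,-1]) = (x (Er [0,0,0,0,0,0,-1,-1])) * (c1 * x (Er [0,0,0,0,1,0,0,0]) + c2 * x (Er [0,0,0,0,1,1,0,0]) + c3 * x (Er [0,0,0,0,1,1,1,0])) + (- (x (Er [0,0,0,0,1,1,0,0]))) * (c1 * x (Er [0,0,0,0,0,-1,-1,-1]) + c2 * x (Er [0,0,0,0,0,0,-1,-1]) + c3 * x (Er [0,0,0,0,0,0,0,-1]))" unfolding lbr_tab[OF assms(1) r assms(2) tab_1 ptab_1]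
    by (simp add: RnL_def RpL_def RmL_def k2_def algebra_simps)
  show ?thesis using a b assms(3,4) by simp
qed

lemma kz_2: assumes "x \<in> nST S8 T8" "qsupp (k2 x c1 c2 c3)" "c1 * x (Er [0,0,0,0,1,0,0,0]) + c2 * x (Er [0,0,0,0,1,1,0,0]) + c3 * x (Er [0,0,0,0,1,1,1,0]) = 0" "c1 * x (Er [0,0,0,0,0,-1,-1,-1]) + c2 * x (Er [0,0,0,0,0,0,-1,-1]) + c3 * x (Er [0,0,0,0,0,0,0,-1]) = 0"
  shows "lbr x (k1 x) (Er [0,0,0,0,0,0,0,-1]) = 0 \<and> lbr x (k2 x c1 c2 c3) (Er [0,0,0,0,0,0,0,-1]) = 0"
proof -
  have r: "[0,0,0,0,0,0,0,-1] \<in> roots" by (simp add: roots_q60 q60_def)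
  have a: "lbr x (k1 x) (Er [0,0,0,0,0,0,0,-1]) = 0" unfolding lbr_tab[OF assms(1) r k1_qsupp tab_2 ptab_2]
    by (simp add: RnL_def RpL_def RmL_def k1_def AWL_def algebra_simps)
  have b: "lbr x (k2 x c1 c2 c3) (Er [0,0,0,0,0,0,0,-1]) = (- (x (Er [0,0,0,0,1,1,1,0]))) * (c1 * x (Er [0,0,0,0,0,-1,-1,-1]) + c2 * x (Er [0,0,0,0,0,0,-1,-1]) + c3 * x (Er [0,0,0,0,0,0,0,-1]))" unfolding lbr_tab[OF assms(1) r assms(2) tab_2 ptab_2]
    by (simp add: RnL_def RpL_def RmL_def k2_def algebra_simps)
  show ?thesis using a b assms(3,4) by simp
qed

lemma kz_3: assumes "x \<in> nST S8 T8" "qsupp (k2 x c1 c2 c3)" "c1 * x (Er [0,0,0,0,1,0,0,0]) + c2 * x (Er [0,0,0,0,1,1,0,0]) + c3 * x (Er [0,0,0,0,1,1,1,0]) = 0" "c1 * x (Er [0,0,0,0,0,-1,-1,-1]) + c2 * x (Er [0,0,0,0,0,0,-1,-1]) + c3 * x (Er [0,0,0,0,0,0,0,-1]) = 0"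
  shows "lbr x (k1 x) (Er [0,0,0,1,0,0,0,0]) = 0 \<and> lbr x (k2 x c1 c2 c3) (Er [0,0,0,1,0,0,0,0]) = 0"
proof -
  have r: "[0,0,0,1,0,0,0,0] \<in> roots" by (simp add: roots_q60 q60_def)
  have a: "lbr x (k1 x) (Er [0,0,0,1,0,0,0,0]) = 0" unfolding lbr_tab[OF assms(1) r k1_qsupp tab_3 ptab_3]
    by (simp add: RnL_def RpL_def RmL_def k1_def AWL_def algebra_simps)
  have b: "lbr x (k2 x c1 c2 c3) (Er [0,0,0,1,0,0,0,0]) = 0" unfolding lbr_tab[OF assms(1) r assms(2) tab_3 ptab_3]
    by (simp add: RnL_def RpL_def RmL_def k2_def algebra_simps)
  show ?thesis using a b assms(3,4) by simp
qed

lemma kz_4: assumes "x \<in> nST S8 T8" "qsupp (k2 x c1 c2 c3)" "c1 * x (Er [0,0,0,0,1,0,0,0]) + c2 * x (Er [0,0,0,0,1,1,0,0]) + c3 * x (Er [0,0,0,0,1,1,1,0]) = 0" "c1 * x (Er [0,0,0,0,0,-1,-1,-1]) + c2 * x (Er [0,0,0,0,0,0,-1,-1]) + c3 * x (Er [0,0,0,0,0,0,0,-1]) = 0"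
  shows "lbr x (k1 x) (Er [0,1,0,1,0,0,0,0]) = 0 \<and> lbr x (k2 x c1 c2 c3) (Er [0,1,0,1,0,0,0,0]) = 0"
proof -
  have r: "[0,1,0,1,0,0,0,0] \<in> roots" by (simp add: roots_q60 q60_def)
  have a: "lbr x (k1 x) (Er [0,1,0,1,0,0,0,0]) = 0" unfolding lbr_tab[OF assms(1) r k1_qsupp tab_4 ptab_4]
    by (simp add: RnL_def RpL_def RmL_def k1_def AWL_def algebra_simps)
  have b: "lbr x (k2 x c1 c2 c3) (Er [0,1,0,1,0,0,0,0]) = 0" unfolding lbr_tab[OF assms(1) r assms(2) tab_4 ptab_4]
    by (simp add: RnL_def RpL_def RmL_def k2_def algebra_simps)
  show ?thesis using a b assms(3,4) by simp
qed

lemma kz_5: assumes "x \<in> nST S8 T8" "qsupp (k2 x c1 c2 c3)" "c1 * x (Er [0,0,0,0,1,0,0,0]) + c2 * x (Er [0,0,0,0,1,1,0,0]) + c3 * x (Er [0,0,0,0,1,1,1,0]) = 0" "c1 * x (Er [0,0,0,0,0,-1,-1,-1]) + c2 * x (Er [0,0,0,0,0,0,-1,-1]) + c3 * x (Er [0,0,0,0,0,0,0,-1]) = 0"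
  shows "lbr x (k1 x) (Er [0,0,1,1,0,0,0,0]) = 0 \<and> lbr x (k2 x c1 c2 c3) (Er [0,0,1,1,0,0,0,0]) = 0"
proof -
  have r: "[0,0,1,1,0,0,0,0] \<in> roots" by (simp add: roots_q60 q60_def)
  have a: "lbr x (k1 x) (Er [0,0,1,1,0,0,0,0]) = 0" unfolding lbr_tab[OF assms(1) r k1_qsupp tab_5 ptab_5]
    by (simp add: RnL_def RpL_def RmL_def k1_def AWL_def algebra_simps)
  have b: "lbr x (k2 x c1 c2 c3) (Er [0,0,1,1,0,0,0,0]) = 0" unfolding lbr_tab[OF assms(1) r assms(2) tab_5 ptab_5]
    by (simp add: RnL_def RpL_def RmL_def k2_def algebra_simps)
  show ?thesis using a b assms(3,4) by simp
qed

lemma kz_6: assumes "x \<in> nST S8 T8" "qsupp (k2 x c1 c2 c3)" "c1 * x (Er [0,0,0,0,1,0,0,0]) + c2 * x (Er [0,0,0,0,1,1,0,0]) + c3 * x (Er [0,0,0,0,1,1,1,0]) = 0" "c1 * x (Er [0,0,0,0,0,-1,-1,-1]) + c2 * x (Er [0,0,0,0,0,0,-1,-1]) + c3 * x (Er [0,0,0,0,0,0,0,-1]) = 0"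
  shows "lbr x (k1 x) (Er [1,0,1,1,0,0,0,0]) = 0 \<and> lbr x (k2 x c1 c2 c3) (Er [1,0,1,1,0,0,0,0]) = 0"
proof -
  have r: "[1,0,1,1,0,0,0,0] \<in> roots" by (simp add: roots_q60 q60_def)
  have a: "lbr x (k1 x) (Er [1,0,1,1,0,0,0,0]) = 0" unfolding lbr_tab[OF assms(1) r k1_qsupp tab_6 ptab_6]
    by (simp add: RnL_def RpL_def RmL_def k1_def AWL_def algebra_simps)
  have b: "lbr x (k2 x c1 c2 c3) (Er [1,0,1,1,0,0,0,0]) = 0" unfolding lbr_tab[OF assms(1) r assms(2) tab_6 ptab_6]
    by (simp add: RnL_def RpL_def RmL_def k2_def algebra_simps)
  show ?thesis using a b assms(3,4) by simp
qed

lemma kz_7: assumes "x \<in> nST S8 T8" "qsupp (k2 x c1 c2 c3)" "c1 * x (Er [0,0,0,0,1,0,0,0]) + c2 * x (Er [0,0,0,0,1,1,0,0]) + c3 * x (Er [0,0,0,0,1,1,1,0]) = 0" "c1 * x (Er [0,0,0,0,0,-1,-1,-1]) + c2 * x (Er [0,0,0,0,0,0,-1,-1]) + c3 * x (Er [0,0,0,0,0,0,0,-1]) = 0"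
  shows "lbr x (k1 x) (Er [0,1,1,1,0,0,0,0]) = 0 \<and> lbr x (k2 x c1 c2 c3) (Er [0,1,1,1,0,0,0,0]) = 0"
proof -
  have r: "[0,1,1,1,0,0,0,0] \<in> roots" by (simp add: roots_q60 q60_def)
  have a: "lbr x (k1 x) (Er [0,1,1,1,0,0,0,0]) = 0" unfolding lbr_tab[OF assms(1) r k1_qsupp tab_7 ptab_7]
    by (simp add: RnL_def RpL_def RmL_def k1_def AWL_def algebra_simps)
  have b: "lbr x (k2 x c1 c2 c3) (Er [0,1,1,1,0,0,0,0]) = 0" unfolding lbr_tab[OF assms(1) r assms(2) tab_7 ptab_7]
    by (simp add: RnL_def RpL_def RmL_def k2_def algebra_simps)
  show ?thesis using a b assms(3,4) by simp
qed

lemma kz_8: assumes "x \<in> nST S8 T8" "qsupp (k2 x c1 c2 c3)" "c1 * x (Er [0,0,0,0,1,0,0,0]) + c2 * x (Er [0,0,0,0,1,1,0,0]) + c3 * x (Er [0,0,0,0,1,1,1,0]) = 0" "c1 * x (Er [0,0,0,0,0,-1,-1,-1]) + c2 * x (Er [0,0,0,0,0,0,-1,-1]) + c3 * x (Er [0,0,0,0,0,0,0,-1]) = 0"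
  shows "lbr x (k1 x) (Er [1,1,1,1,0,0,0,0]) = 0 \<and> lbr x (k2 x c1 c2 c3) (Er [1,1,1,1,0,0,0,0]) = 0"
proof -
  have r: "[1,1,1,1,0,0,0,0] \<in> roots" by (simp add: roots_q60 q60_def)
  have a: "lbr x (k1 x) (Er [1,1,1,1,0,0,0,0]) = 0" unfolding lbr_tab[OF assms(1) r k1_qsupp tab_8 ptab_8]
    by (simp add: RnL_def RpL_def RmL_def k1_def AWL_def algebra_simps)
  have b: "lbr x (k2 x c1 c2 c3) (Er [1,1,1,1,0,0,0,0]) = 0" unfolding lbr_tab[OF assms(1) r assms(2) tab_8 ptab_8]
    by (simp add: RnL_def RpL_def RmL_def k2_def algebra_simps)
  show ?thesis using a b assms(3,4) by simp
qed

lemma kz_9: assumes "x \<in> nST S8 T8" "qsupp (k2 x c1 c2 c3)" "c1 * x (Er [0,0,0,0,1,0,0,0]) + c2 * x (Er [0,0,0,0,1,1,0,0]) + c3 * x (Er [0,0,0,0,1,1,1,0]) = 0" "c1 * x (Er [0,0,0,0,0,-1,-1,-1]) + c2 * x (Er [0,0,0,0,0,0,-1,-1]) + c3 * x (Er [0,0,0,0,0,0,0,-1]) = 0"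
  shows "lbr x (k1 x) (Er [0,0,0,0,1,0,0,0]) = 0 \<and> lbr x (k2 x c1 c2 c3) (Er [0,0,0,0,1,0,0,0]) = 0"
proof -
  have r: "[0,0,0,0,1,0,0,0] \<in> roots" by (simp add: roots_q60 q60_def)
  have a: "lbr x (k1 x) (Er [0,0,0,0,1,0,0,0]) = 0" unfolding lbr_tab[OF assms(1) r k1_qsupp tab_9 ptab_9]
    by (simp add: RnL_def RpL_def RmL_def k1_def AWL_def algebra_simps)
  have b: "lbr x (k2 x c1 c2 c3) (Er [0,0,0,0,1,0,0,0]) = (- (x (Er [0,0,0,0,1,0,0,0]))) * (c1 * x (Er [0,0,0,0,1,0,0,0]) + c2 * x (Er [0,0,0,0,1,1,0,0]) + c3 * x (Er [0,0,0,0,1,1,1,0]))" unfolding lbr_tab[OF assms(1) r assms(2) tab_9 ptab_9]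
    by (simp add: RnL_def RpL_def RmL_def k2_def algebra_simps)
  show ?thesis using a b assms(3,4) by simp
qed

lemma kz_10: assumes "x \<in> nST S8 T8" "qsupp (k2 x c1 c2 c3)" "c1 * x (Er [0,0,0,0,1,0,0,0]) + c2 * x (Er [0,0,0,0,1,1,0,0]) + c3 * x (Er [0,0,0,0,1,1,1,0]) = 0" "c1 * x (Er [0,0,0,0,0,-1,-1,-1]) + c2 * x (Er [0,0,0,0,0,0,-1,-1]) + c3 * x (Er [0,0,0,0,0,0,0,-1]) = 0"
  shows "lbr x (k1 x) (Er [0,0,0,0,1,1,0,0]) = 0 \<and> lbr x (k2 x c1 c2 c3) (Er [0,0,0,0,1,1,0,0]) = 0"
proof -
  have r: "[0,0,0,0,1,1,0,0] \<in> roots" by (simp add: roots_q60 q60_def)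
  have a: "lbr x (k1 x) (Er [0,0,0,0,1,1,0,0]) = 0" unfolding lbr_tab[OF assms(1) r k1_qsupp tab_10 ptab_10]
    by (simp add: RnL_def RpL_def RmL_def k1_def AWL_def algebra_simps)
  have b: "lbr x (k2 x c1 c2 c3) (Er [0,0,0,0,1,1,0,0]) = 0" unfolding lbr_tab[OF assms(1) r assms(2) tab_10 ptab_10]
    by (simp add: RnL_def RpL_def RmL_def k2_def algebra_simps)
  show ?thesis using a b assms(3,4) by simp
qed

lemma kz_11: assumes "x \<in> nST S8 T8" "qsupp (k2 x c1 c2 c3)" "c1 * x (Er [0,0,0,0,1,0,0,0]) + c2 * x (Er [0,0,0,0,1,1,0,0]) + c3 * x (Er [0,0,0,0,1,1,1,0]) = 0" "c1 * x (Er [0,0,0,0,0,-1,-1,-1]) + c2 * x (Er [0,0,0,0,0,0,-1,-1]) + c3 * x (Er [0,0,0,0,0,0,0,-1]) = 0"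
  shows "lbr x (k1 x) (Er [0,0,0,0,1,1,1,0]) = 0 \<and> lbr x (k2 x c1 c2 c3) (Er [0,0,0,0,1,1,1,0]) = 0"
proof -
  have r: "[0,0,0,0,1,1,1,0] \<in> roots" by (simp add: roots_q60 q60_def)
  have a: "lbr x (k1 x) (Er [0,0,0,0,1,1,1,0]) = 0" unfolding lbr_tab[OF assms(1) r k1_qsupp tab_11 ptab_11]
    by (simp add: RnL_def RpL_def RmL_def k1_def AWL_def algebra_simps)
  have b: "lbr x (k2 x c1 c2 c3) (Er [0,0,0,0,1,1,1,0]) = (- (x (Er [0,0,0,0,1,1,1,0]))) * (c1 * x (Er [0,0,0,0,1,0,0,0]) + c2 * x (Er [0,0,0,0,1,1,0,0]) + c3 * x (Er [0,0,0,0,1,1,1,0]))" unfolding lbr_tab[OF assms(1) r assms(2) tab_11 ptab_11]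
    by (simp add: RnL_def RpL_def RmL_def k2_def algebra_simps)
  show ?thesis using a b assms(3,4) by simp
qed

lemma kz_12: assumes "x \<in> nST S8 T8" "qsupp (k2 x c1 c2 c3)" "c1 * x (Er [0,0,0,0,1,0,0,0]) + c2 * x (Er [0,0,0,0,1,1,0,0]) + c3 * x (Er [0,0,0,0,1,1,1,0]) = 0" "c1 * x (Er [0,0,0,0,0,-1,-1,-1]) + c2 * x (Er [0,0,0,0,0,0,-1,-1]) + c3 * x (Er [0,0,0,0,0,0,0,-1]) = 0"
  shows "lbr x (k1 x) (Er [0,0,0,1,1,0,0,0]) = 0 \<and> lbr x (k2 x c1 c2 c3) (Er [0,0,0,1,1,0,0,0]) = 0"
proof -
  have r: "[0,0,0,1,1,0,0,0] \<in> roots" by (simp add: roots_q60 q60_def)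
  have a: "lbr x (k1 x) (Er [0,0,0,1,1,0,0,0]) = 0" unfolding lbr_tab[OF assms(1) r k1_qsupp tab_12 ptab_12]
    by (simp add: RnL_def RpL_def RmL_def k1_def AWL_def algebra_simps)
  have b: "lbr x (k2 x c1 c2 c3) (Er [0,0,0,1,1,0,0,0]) = 0" unfolding lbr_tab[OF assms(1) r assms(2) tab_12 ptab_12]
    by (simp add: RnL_def RpL_def RmL_def k2_def algebra_simps)
  show ?thesis using a b assms(3,4) by simp
qed

lemma kz_13: assumes "x \<in> nST S8 T8" "qsupp (k2 x c1 c2 c3)" "c1 * x (Er [0,0,0,0,1,0,0,0]) + c2 * x (Er [0,0,0,0,1,1,0,0]) + c3 * x (Er [0,0,0,0,1,1,1,0]) = 0" "c1 * x (Er [0,0,0,0,0,-1,-1,-1]) + c2 * x (Er [0,0,0,0,0,0,-1,-1]) + c3 * x (Er [0,0,0,0,0,0,0,-1]) = 0"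
  shows "lbr x (k1 x) (Er [0,0,0,1,1,1,0,0]) = 0 \<and> lbr x (k2 x c1 c2 c3) (Er [0,0,0,1,1,1,0,0]) = 0"
proof -
  have r: "[0,0,0,1,1,1,0,0] \<in> roots" by (simp add: roots_q60 q60_def)
  have a: "lbr x (k1 x) (Er [0,0,0,1,1,1,0,0]) = 0" unfolding lbr_tab[OF assms(1) r k1_qsupp tab_13 ptab_13]
    by (simp add: RnL_def RpL_def RmL_def k1_def AWL_def algebra_simps)
  have b: "lbr x (k2 x c1 c2 c3) (Er [0,0,0,1,1,1,0,0]) = (x (Er [0,0,0,1,1,1,0,0])) * (c1 * x (Er [0,0,0,0,1,0,0,0]) + c2 * x (Er [0,0,0,0,1,1,0,0]) + c3 * x (Er [0,0,0,0,1,1,1,0]))" unfolding lbr_tab[OF assms(1) r assms(2) tab_13 ptab_13]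
    by (simp add: RnL_def RpL_def RmL_def k2_def algebra_simps)
  show ?thesis using a b assms(3,4) by simp
qed

lemma kz_14: assumes "x \<in> nST S8 T8" "qsupp (k2 x c1 c2 c3)" "c1 * x (Er [0,0,0,0,1,0,0,0]) + c2 * x (Er [0,0,0,0,1,1,0,0]) + c3 * x (Er [0,0,0,0,1,1,1,0]) = 0" "c1 * x (Er [0,0,0,0,0,-1,-1,-1]) + c2 * x (Er [0,0,0,0,0,0,-1,-1]) + c3 * x (Er [0,0,0,0,0,0,0,-1]) = 0"
  shows "lbr x (k1 x) (Er [0,0,0,1,1,1,1,0]) = 0 \<and> lbr x (k2 x c1 c2 c3) (Er [0,0,0,1,1,1,1,0]) = 0"
proof -
  have r: "[0,0,0,1,1,1,1,0] \<in> roots" by (simp add: roots_q60 q60_def)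
  have a: "lbr x (k1 x) (Er [0,0,0,1,1,1,1,0]) = 0" unfolding lbr_tab[OF assms(1) r k1_qsupp tab_14 ptab_14]
    by (simp add: RnL_def RpL_def RmL_def k1_def AWL_def algebra_simps)
  have b: "lbr x (k2 x c1 c2 c3) (Er [0,0,0,1,1,1,1,0]) = 0" unfolding lbr_tab[OF assms(1) r assms(2) tab_14 ptab_14]
    by (simp add: RnL_def RpL_def RmL_def k2_def algebra_simps)
  show ?thesis using a b assms(3,4) by simp
qed

lemma kz_15: assumes "x \<in> nST S8 T8" "qsupp (k2 x c1 c2 c3)" "c1 * x (Er [0,0,0,0,1,0,0,0]) + c2 * x (Er [0,0,0,0,1,1,0,0]) + c3 * x (Er [0,0,0,0,1,1,1,0]) = 0" "c1 * x (Er [0,0,0,0,0,-1,-1,-1]) + c2 * x (Er [0,0,0,0,0,0,-1,-1]) + c3 * x (Er [0,0,0,0,0,0,0,-1]) = 0"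
  shows "lbr x (k1 x) (Er [0,1,0,1,1,0,0,0]) = 0 \<and> lbr x (k2 x c1 c2 c3) (Er [0,1,0,1,1,0,0,0]) = 0"
proof -
  have r: "[0,1,0,1,1,0,0,0] \<in> roots" by (simp add: roots_q60 q60_def)
  have a: "lbr x (k1 x) (Er [0,1,0,1,1,0,0,0]) = 0" unfolding lbr_tab[OF assms(1) r k1_qsupp tab_15 ptab_15]
    by (simp add: RnL_def RpL_def RmL_def k1_def AWL_def algebra_simps)
  have b: "lbr x (k2 x c1 c2 c3) (Er [0,1,0,1,1,0,0,0]) = 0" unfolding lbr_tab[OF assms(1) r assms(2) tab_15 ptab_15]
    by (simp add: RnL_def RpL_def RmL_def k2_def algebra_simps)
  show ?thesis using a b assms(3,4) by simp
qed

lemma kz_16: assumes "x \<in> nST S8 T8" "qsupp (k2 x c1 c2 c3)" "c1 * x (Er [0,0,0,0,1,0,0,0]) + c2 * x (Er [0,0,0,0,1,1,0,0]) + c3 * x (Er [0,0,0,0,1,1,1,0]) = 0" "c1 * x (Er [0,0,0,0,0,-1,-1,-1]) + c2 * x (Er [0,0,0,0,0,0,-1,-1]) + c3 * x (Er [0,0,0,0,0,0,0,-1]) = 0"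
  shows "lbr x (k1 x) (Er [0,1,0,1,1,1,0,0]) = 0 \<and> lbr x (k2 x c1 c2 c3) (Er [0,1,0,1,1,1,0,0]) = 0"
proof -
  have r: "[0,1,0,1,1,1,0,0] \<in> roots" by (simp add: roots_q60 q60_def)
  have a: "lbr x (k1 x) (Er [0,1,0,1,1,1,0,0]) = 0" unfolding lbr_tab[OF assms(1) r k1_qsupp tab_16 ptab_16]
    by (simp add: RnL_def RpL_def RmL_def k1_def AWL_def algebra_simps)
  have b: "lbr x (k2 x c1 c2 c3) (Er [0,1,0,1,1,1,0,0]) = (x (Er [0,1,0,1,1,1,0,0])) * (c1 * x (Er [0,0,0,0,1,0,0,0]) + c2 * x (Er [0,0,0,0,1,1,0,0]) + c3 * x (Er [0,0,0,0,1,1,1,0]))" unfolding lbr_tab[OF assms(1) r assms(2) tab_16 ptab_16]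
    by (simp add: RnL_def RpL_def RmL_def k2_def algebra_simps)
  show ?thesis using a b assms(3,4) by simp
qed

lemma kz_17: assumes "x \<in> nST S8 T8" "qsupp (k2 x c1 c2 c3)" "c1 * x (Er [0,0,0,0,1,0,0,0]) + c2 * x (Er [0,0,0,0,1,1,0,0]) + c3 * x (Er [0,0,0,0,1,1,1,0]) = 0" "c1 * x (Er [0,0,0,0,0,-1,-1,-1]) + c2 * x (Er [0,0,0,0,0,0,-1,-1]) + c3 * x (Er [0,0,0,0,0,0,0,-1]) = 0"
  shows "lbr x (k1 x) (Er [0,1,0,1,1,1,1,0]) = 0 \<and> lbr x (k2 x c1 c2 c3) (Er [0,1,0,1,1,1,1,0]) = 0"
proof -
  have r: "[0,1,0,1,1,1,1,0] \<in> roots" by (simp add: roots_q60 q60_def)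
  have a: "lbr x (k1 x) (Er [0,1,0,1,1,1,1,0]) = 0" unfolding lbr_tab[OF assms(1) r k1_qsupp tab_17 ptab_17]
    by (simp add: RnL_def RpL_def RmL_def k1_def AWL_def algebra_simps)
  have b: "lbr x (k2 x c1 c2 c3) (Er [0,1,0,1,1,1,1,0]) = 0" unfolding lbr_tab[OF assms(1) r assms(2) tab_17 ptab_17]
    by (simp add: RnL_def RpL_def RmL_def k2_def algebra_simps)
  show ?thesis using a b assms(3,4) by simp
qed

lemma kz_18: assumes "x \<in> nST S8 T8" "qsupp (k2 x c1 c2 c3)" "c1 * x (Er [0,0,0,0,1,0,0,0]) + c2 * x (Er [0,0,0,0,1,1,0,0]) + c3 * x (Er [0,0,0,0,1,1,1,0]) = 0" "c1 * x (Er [0,0,0,0,0,-1,-1,-1]) + c2 * x (Er [0,0,0,0,0,0,-1,-1]) + c3 * x (Er [0,0,0,0,0,0,0,-1]) = 0"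
  shows "lbr x (k1 x) (Er [0,0,1,1,1,0,0,0]) = 0 \<and> lbr x (k2 x c1 c2 c3) (Er [0,0,1,1,1,0,0,0]) = 0"
proof -
  have r: "[0,0,1,1,1,0,0,0] \<in> roots" by (simp add: roots_q60 q60_def)
  have a: "lbr x (k1 x) (Er [0,0,1,1,1,0,0,0]) = 0" unfolding lbr_tab[OF assms(1) r k1_qsupp tab_18 ptab_18]
    by (simp add: RnL_def RpL_def RmL_def k1_def AWL_def algebra_simps)
  have b: "lbr x (k2 x c1 c2 c3) (Er [0,0,1,1,1,0,0,0]) = 0" unfolding lbr_tab[OF assms(1) r assms(2) tab_18 ptab_18]
    by (simp add: RnL_def RpL_def RmL_def k2_def algebra_simps)
  show ?thesis using a b assms(3,4) by simp
qed

lemma kz_19: assumes "x \<in> nST S8 T8" "qsupp (k2 x c1 c2 c3)" "c1 * x (Er [0,0,0,0,1,0,0,0]) + c2 * x (Er [0,0,0,0,1,1,0,0]) + c3 * x (Er [0,0,0,0,1,1,1,0]) = 0" "c1 * x (Er [0,0,0,0,0,-1,-1,-1]) + c2 * x (Er [0,0,0,0,0,0,-1,-1]) + c3 * x (Er [0,0,0,0,0,0,0,-1]) = 0"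
  shows "lbr x (k1 x) (Er [0,0,1,1,1,1,0,0]) = 0 \<and> lbr x (k2 x c1 c2 c3) (Er [0,0,1,1,1,1,0,0]) = 0"
proof -
  have r: "[0,0,1,1,1,1,0,0] \<in> roots" by (simp add: roots_q60 q60_def)
  have a: "lbr x (k1 x) (Er [0,0,1,1,1,1,0,0]) = 0" unfolding lbr_tab[OF assms(1) r k1_qsupp tab_19 ptab_19]
    by (simp add: RnL_def RpL_def RmL_def k1_def AWL_def algebra_simps)
  have b: "lbr x (k2 x c1 c2 c3) (Er [0,0,1,1,1,1,0,0]) = (x (Er [0,0,1,1,1,1,0,0])) * (c1 * x (Er [0,0,0,0,1,0,0,0]) + c2 * x (Er [0,0,0,0,1,1,0,0]) + c3 * x (Er [0,0,0,0,1,1,1,0]))" unfolding lbr_tab[OF assms(1) r assms(2) tab_19 ptab_19]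
    by (simp add: RnL_def RpL_def RmL_def k2_def algebra_simps)
  show ?thesis using a b assms(3,4) by simp
qed

lemma kz_20: assumes "x \<in> nST S8 T8" "qsupp (k2 x c1 c2 c3)" "c1 * x (Er [0,0,0,0,1,0,0,0]) + c2 * x (Er [0,0,0,0,1,1,0,0]) + c3 * x (Er [0,0,0,0,1,1,1,0]) = 0" "c1 * x (Er [0,0,0,0,0,-1,-1,-1]) + c2 * x (Er [0,0,0,0,0,0,-1,-1]) + c3 * x (Er [0,0,0,0,0,0,0,-1]) = 0"
  shows "lbr x (k1 x) (Er [0,0,1,1,1,1,1,0]) = 0 \<and> lbr x (k2 x c1 c2 c3) (Er [0,0,1,1,1,1,1,0]) = 0"
proof -
  have r: "[0,0,1,1,1,1,1,0] \<in> roots" by (simp add: roots_q60 q60_def)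
  have a: "lbr x (k1 x) (Er [0,0,1,1,1,1,1,0]) = 0" unfolding lbr_tab[OF assms(1) r k1_qsupp tab_20 ptab_20]
    by (simp add: RnL_def RpL_def RmL_def k1_def AWL_def algebra_simps)
  have b: "lbr x (k2 x c1 c2 c3) (Er [0,0,1,1,1,1,1,0]) = 0" unfolding lbr_tab[OF assms(1) r assms(2) tab_20 ptab_20]
    by (simp add: RnL_def RpL_def RmL_def k2_def algebra_simps)
  show ?thesis using a b assms(3,4) by simp
qed

lemma kz_21: assumes "x \<in> nST S8 T8" "qsupp (k2 x c1 c2 c3)" "c1 * x (Er [0,0,0,0,1,0,0,0]) + c2 * x (Er [0,0,0,0,1,1,0,0]) + c3 * x (Er [0,0,0,0,1,1,1,0]) = 0" "c1 * x (Er [0,0,0,0,0,-1,-1,-1]) + c2 * x (Er [0,0,0,0,0,0,-1,-1]) + c3 * x (Er [0,0,0,0,0,0,0,-1]) = 0"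
  shows "lbr x (k1 x) (Er [1,0,1,1,1,0,0,0]) = 0 \<and> lbr x (k2 x c1 c2 c3) (Er [1,0,1,1,1,0,0,0]) = 0"
proof -
  have r: "[1,0,1,1,1,0,0,0] \<in> roots" by (simp add: roots_q60 q60_def)
  have a: "lbr x (k1 x) (Er [1,0,1,1,1,0,0,0]) = 0" unfolding lbr_tab[OF assms(1) r k1_qsupp tab_21 ptab_21]
    by (simp add: RnL_def RpL_def RmL_def k1_def AWL_def algebra_simps)
  have b: "lbr x (k2 x c1 c2 c3) (Er [1,0,1,1,1,0,0,0]) = 0" unfolding lbr_tab[OF assms(1) r assms(2) tab_21 ptab_21]
    by (simp add: RnL_def RpL_def RmL_def k2_def algebra_simps)
  show ?thesis using a b assms(3,4) by simp
qed

lemma kz_22: assumes "x \<in> nST S8 T8" "qsupp (k2 x c1 c2 c3)" "c1 * x (Er [0,0,0,0,1,0,0,0]) + c2 * x (Er [0,0,0,0,1,1,0,0]) + c3 * x (Er [0,0,0,0,1,1,1,0]) = 0" "c1 * x (Er [0,0,0,0,0,-1,-1,-1]) + c2 * x (Er [0,0,0,0,0,0,-1,-1]) + c3 * x (Er [0,0,0,0,0,0,0,-1]) = 0"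
  shows "lbr x (k1 x) (Er [1,0,1,1,1,1,0,0]) = 0 \<and> lbr x (k2 x c1 c2 c3) (Er [1,0,1,1,1,1,0,0]) = 0"
proof -
  have r: "[1,0,1,1,1,1,0,0] \<in> roots" by (simp add: roots_q60 q60_def)
  have a: "lbr x (k1 x) (Er [1,0,1,1,1,1,0,0]) = 0" unfolding lbr_tab[OF assms(1) r k1_qsupp tab_22 ptab_22]
    by (simp add: RnL_def RpL_def RmL_def k1_def AWL_def algebra_simps)
  have b: "lbr x (k2 x c1 c2 c3) (Er [1,0,1,1,1,1,0,0]) = (x (Er [1,0,1,1,1,1,0,0])) * (c1 * x (Er [0,0,0,0,1,0,0,0]) + c2 * x (Er [0,0,0,0,1,1,0,0]) + c3 * x (Er [0,0,0,0,1,1,1,0]))" unfolding lbr_tab[OF assms(1) r assms(2) tab_22 ptab_22]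
    by (simp add: RnL_def RpL_def RmL_def k2_def algebra_simps)
  show ?thesis using a b assms(3,4) by simp
qed

lemma kz_23: assumes "x \<in> nST S8 T8" "qsupp (k2 x c1 c2 c3)" "c1 * x (Er [0,0,0,0,1,0,0,0]) + c2 * x (Er [0,0,0,0,1,1,0,0]) + c3 * x (Er [0,0,0,0,1,1,1,0]) = 0" "c1 * x (Er [0,0,0,0,0,-1,-1,-1]) + c2 * x (Er [0,0,0,0,0,0,-1,-1]) + c3 * x (Er [0,0,0,0,0,0,0,-1]) = 0"
  shows "lbr x (k1 x) (Er [1,0,1,1,1,1,1,0]) = 0 \<and> lbr x (k2 x c1 c2 c3) (Er [1,0,1,1,1,1,1,0]) = 0"
proof -
  have r: "[1,0,1,1,1,1,1,0] \<in> roots" by (simp add: roots_q60 q60_def)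
  have a: "lbr x (k1 x) (Er [1,0,1,1,1,1,1,0]) = 0" unfolding lbr_tab[OF assms(1) r k1_qsupp tab_23 ptab_23]
    by (simp add: RnL_def RpL_def RmL_def k1_def AWL_def algebra_simps)
  have b: "lbr x (k2 x c1 c2 c3) (Er [1,0,1,1,1,1,1,0]) = 0" unfolding lbr_tab[OF assms(1) r assms(2) tab_23 ptab_23]
    by (simp add: RnL_def RpL_def RmL_def k2_def algebra_simps)
  show ?thesis using a b assms(3,4) by simp
qed

lemma kz_24: assumes "x \<in> nST S8 T8" "qsupp (k2 x c1 c2 c3)" "c1 * x (Er [0,0,0,0,1,0,0,0]) + c2 * x (Er [0,0,0,0,1,1,0,0]) + c3 * x (Er [0,0,0,0,1,1,1,0]) = 0" "c1 * x (Er [0,0,0,0,0,-1,-1,-1]) + c2 * x (Er [0,0,0,0,0,0,-1,-1]) + c3 * x (Er [0,0,0,0,0,0,0,-1]) = 0"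
  shows "lbr x (k1 x) (Er [0,1,1,1,1,0,0,0]) = 0 \<and> lbr x (k2 x c1 c2 c3) (Er [0,1,1,1,1,0,0,0]) = 0"
proof -
  have r: "[0,1,1,1,1,0,0,0] \<in> roots" by (simp add: roots_q60 q60_def)
  have a: "lbr x (k1 x) (Er [0,1,1,1,1,0,0,0]) = 0" unfolding lbr_tab[OF assms(1) r k1_qsupp tab_24 ptab_24]
    by (simp add: RnL_def RpL_def RmL_def k1_def AWL_def algebra_simps)
  have b: "lbr x (k2 x c1 c2 c3) (Er [0,1,1,1,1,0,0,0]) = 0" unfolding lbr_tab[OF assms(1) r assms(2) tab_24 ptab_24]
    by (simp add: RnL_def RpL_def RmL_def k2_def algebra_simps)
  show ?thesis using a b assms(3,4) by simp
qed

lemma kz_25: assumes "x \<in> nST S8 T8" "qsupp (k2 x c1 c2 c3)" "c1 * x (Er [0,0,0,0,1,0,0,0]) + c2 * x (Er [0,0,0,0,1,1,0,0]) + c3 * x (Er [0,0,0,0,1,1,1,0]) = 0" "c1 * x (Er [0,0,0,0,0,-1,-1,-1]) + c2 * x (Er [0,0,0,0,0,0,-1,-1]) + c3 * x (Er [0,0,0,0,0,0,0,-1]) = 0"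
  shows "lbr x (k1 x) (Er [0,1,1,1,1,1,0,0]) = 0 \<and> lbr x (k2 x c1 c2 c3) (Er [0,1,1,1,1,1,0,0]) = 0"
proof -
  have r: "[0,1,1,1,1,1,0,0] \<in> roots" by (simp add: roots_q60 q60_def)
  have a: "lbr x (k1 x) (Er [0,1,1,1,1,1,0,0]) = 0" unfolding lbr_tab[OF assms(1) r k1_qsupp tab_25 ptab_25]
    by (simp add: RnL_def RpL_def RmL_def k1_def AWL_def algebra_simps)
  have b: "lbr x (k2 x c1 c2 c3) (Er [0,1,1,1,1,1,0,0]) = (x (Er [0,1,1,1,1,1,0,0])) * (c1 * x (Er [0,0,0,0,1,0,0,0]) + c2 * x (Er [0,0,0,0,1,1,0,0]) + c3 * x (Er [0,0,0,0,1,1,1,0]))" unfolding lbr_tab[OF assms(1) r assms(2) tab_25 ptab_25]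
    by (simp add: RnL_def RpL_def RmL_def k2_def algebra_simps)
  show ?thesis using a b assms(3,4) by simp
qed

lemma kz_26: assumes "x \<in> nST S8 T8" "qsupp (k2 x c1 c2 c3)" "c1 * x (Er [0,0,0,0,1,0,0,0]) + c2 * x (Er [0,0,0,0,1,1,0,0]) + c3 * x (Er [0,0,0,0,1,1,1,0]) = 0" "c1 * x (Er [0,0,0,0,0,-1,-1,-1]) + c2 * x (Er [0,0,0,0,0,0,-1,-1]) + c3 * x (Er [0,0,0,0,0,0,0,-1]) = 0"
  shows "lbr x (k1 x) (Er [0,1,1,1,1,1,1,0]) = 0 \<and> lbr x (k2 x c1 c2 c3) (Er [0,1,1,1,1,1,1,0]) = 0"
proof -
  have r: "[0,1,1,1,1,1,1,0] \<in> roots" by (simp add: roots_q60 q60_def)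
  have a: "lbr x (k1 x) (Er [0,1,1,1,1,1,1,0]) = 0" unfolding lbr_tab[OF assms(1) r k1_qsupp tab_26 ptab_26]
    by (simp add: RnL_def RpL_def RmL_def k1_def AWL_def algebra_simps)
  have b: "lbr x (k2 x c1 c2 c3) (Er [0,1,1,1,1,1,1,0]) = 0" unfolding lbr_tab[OF assms(1) r assms(2) tab_26 ptab_26]
    by (simp add: RnL_def RpL_def RmL_def k2_def algebra_simps)
  show ?thesis using a b assms(3,4) by simp
qed

lemma kz_27: assumes "x \<in> nST S8 T8" "qsupp (k2 x c1 c2 c3)" "c1 * x (Er [0,0,0,0,1,0,0,0]) + c2 * x (Er [0,0,0,0,1,1,0,0]) + c3 * x (Er [0,0,0,0,1,1,1,0]) = 0" "c1 * x (Er [0,0,0,0,0,-1,-1,-1]) + c2 * x (Er [0,0,0,0,0,0,-1,-1]) + c3 * x (Er [0,0,0,0,0,0,0,-1]) = 0"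
  shows "lbr x (k1 x) (Er [1,1,1,1,1,0,0,0]) = 0 \<and> lbr x (k2 x c1 c2 c3) (Er [1,1,1,1,1,0,0,0]) = 0"
proof -
  have r: "[1,1,1,1,1,0,0,0] \<in> roots" by (simp add: roots_q60 q60_def)
  have a: "lbr x (k1 x) (Er [1,1,1,1,1,0,0,0]) = 0" unfolding lbr_tab[OF assms(1) r k1_qsupp tab_27 ptab_27]
    by (simp add: RnL_def RpL_def RmL_def k1_def AWL_def algebra_simps)
  have b: "lbr x (k2 x c1 c2 c3) (Er [1,1,1,1,1,0,0,0]) = 0" unfolding lbr_tab[OF assms(1) r assms(2) tab_27 ptab_27]
    by (simp add: RnL_def RpL_def RmL_def k2_def algebra_simps)
  show ?thesis using a b assms(3,4) by simp
qed

lemma kz_28: assumes "x \<in> nST S8 T8" "qsupp (k2 x c1 c2 c3)" "c1 * x (Er [0,0,0,0,1,0,0,0]) + c2 * x (Er [0,0,0,0,1,1,0,0]) + c3 * x (Er [0,0,0,0,1,1,1,0]) = 0" "c1 * x (Er [0,0,0,0,0,-1,-1,-1]) + c2 * x (Er [0,0,0,0,0,0,-1,-1]) + c3 * x (Er [0,0,0,0,0,0,0,-1]) = 0"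
  shows "lbr x (k1 x) (Er [1,1,1,1,1,1,0,0]) = 0 \<and> lbr x (k2 x c1 c2 c3) (Er [1,1,1,1,1,1,0,0]) = 0"
proof -
  have r: "[1,1,1,1,1,1,0,0] \<in> roots" by (simp add: roots_q60 q60_def)
  have a: "lbr x (k1 x) (Er [1,1,1,1,1,1,0,0]) = 0" unfolding lbr_tab[OF assms(1) r k1_qsupp tab_28 ptab_28]
    by (simp add: RnL_def RpL_def RmL_def k1_def AWL_def algebra_simps)
  have b: "lbr x (k2 x c1 c2 c3) (Er [1,1,1,1,1,1,0,0]) = (x (Er [1,1,1,1,1,1,0,0])) * (c1 * x (Er [0,0,0,0,1,0,0,0]) + c2 * x (Er [0,0,0,0,1,1,0,0]) + c3 * x (Er [0,0,0,0,1,1,1,0]))" unfolding lbr_tab[OF assms(1) r assms(2) tab_28 ptab_28]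
    by (simp add: RnL_def RpL_def RmL_def k2_def algebra_simps)
  show ?thesis using a b assms(3,4) by simp
qed

lemma kz_29: assumes "x \<in> nST S8 T8" "qsupp (k2 x c1 c2 c3)" "c1 * x (Er [0,0,0,0,1,0,0,0]) + c2 * x (Er [0,0,0,0,1,1,0,0]) + c3 * x (Er [0,0,0,0,1,1,1,0]) = 0" "c1 * x (Er [0,0,0,0,0,-1,-1,-1]) + c2 * x (Er [0,0,0,0,0,0,-1,-1]) + c3 * x (Er [0,0,0,0,0,0,0,-1]) = 0"
  shows "lbr x (k1 x) (Er [1,1,1,1,1,1,1,0]) = 0 \<and> lbr x (k2 x c1 c2 c3) (Er [1,1,1,1,1,1,1,0]) = 0"
proof -
  have r: "[1,1,1,1,1,1,1,0] \<in> roots" by (simp add: roots_q60 q60_def)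
  have a: "lbr x (k1 x) (Er [1,1,1,1,1,1,1,0]) = 0" unfolding lbr_tab[OF assms(1) r k1_qsupp tab_29 ptab_29]
    by (simp add: RnL_def RpL_def RmL_def k1_def AWL_def algebra_simps)
  have b: "lbr x (k2 x c1 c2 c3) (Er [1,1,1,1,1,1,1,0]) = 0" unfolding lbr_tab[OF assms(1) r assms(2) tab_29 ptab_29]
    by (simp add: RnL_def RpL_def RmL_def k2_def algebra_simps)
  show ?thesis using a b assms(3,4) by simp
qed

definition DLroots :: "int list list" where "DLroots = [[0,0,0,0,0,1,0,0], [0,0,0,0,0,0,1,0], [0,0,0,0,0,1,1,0], [0,0,0,0,0,-1,0,0], [0,0,0,0,0,0,-1,0], [0,0,0,0,0,-1,-1,0], [-1,0,-1,0,0,0,0,0], [0,0,-1,0,0,0,0,0], [0,-1,0,0,0,0,0,0], [-1,0,0,0,0,0,0,0], [1,0,0,0,0,0,0,0], [0,1,0,0,0,0,0,0], [0,0,1,0,0,0,0,0], [1,0,1,0,0,0,0,0], [0,0,0,1,0,0,0,0], [0,1,0,1,0,0,0,0], [0,0,1,1,0,0,0,0], [1,0,1,1,0,0,0,0], [0,1,1,1,0,0,0,0], [1,1,1,1,0,0,0,0], [0,0,0,0,1,0,0,0], [0,0,0,0,1,1,0,0], [0,0,0,0,1,1,1,0]]"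
definition DL :: "idx list" where "DL = [Hc 0, Hc 1, Hc 2, Hc 3, Hc 4, Hc 5, Hc 6, Hc 7] @ map Er DLroots"

lemma len_DL: "length DL = 31" unfolding DL_def DLroots_def by simp
lemma dDL: "distinct DL"
proof -
  have "distinct DLroots" unfolding DLroots_def by code_simp
  then show ?thesis unfolding DL_def by (auto simp: distinct_map inj_on_def)
qed

lemma outL_RnL: "set outL \<subseteq> set RnL" unfolding outL_def RnL_def RpL_def RmL_def by code_simp
lemma outL_roots: "set outL \<subseteq> roots" using outL_RnL RnL_roots by auto
lemma d_outL: "distinct outL" unfolding outL_def by code_simp
lemma len_outL: "length outL = 30" unfolding outL_def by simp

lemma ground_local: "\<forall>r\<in>set outL. \<forall>a\<in>set RnL. qmem (rsub r a) \<longrightarrow> rsub r a \<in> set DLroots"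
  unfolding outL_def RnL_def RpL_def RmL_def DLroots_def qmem_def q60_def rsub_def by code_simp

lemma DL_Hc: "i < 8 \<Longrightarrow> Hc i \<in> set DL" unfolding DL_def by (auto simp: less_Suc_eq numeral_eq_Suc)
lemma DL_Er: "b \<in> set DLroots \<Longrightarrow> Er b \<in> set DL" unfolding DL_def by auto

lemma lbr_local: assumes "x \<in> nST S8 T8" "r \<in> set outL" "qsupp z1" "qsupp z2" "\<forall>c\<in>set DL. z1 c = z2 c"
  shows "lbr x z1 (Er r) = lbr x z2 (Er r)"
proof -
  have r: "r \<in> roots" using assms(2) outL_roots by auto
  have h: "(\<Sum>i<8. z1 (Hc i) * of_int (pair i r)) = (\<Sum>i<8. z2 (Hc i) * of_int (pair i r))"
    using assms(5) DL_Hc by (intro sum.cong) auto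
  have m: "map (\<lambda>a. x (Er a) * (z1 (Er (rsub r a)) * of_int (eps a (rsub r a)))) (filter (\<lambda>a. qmem (rsub r a)) RnL)
    = map (\<lambda>a. x (Er a) * (z2 (Er (rsub r a)) * of_int (eps a (rsub r a)))) (filter (\<lambda>a. qmem (rsub r a)) RnL)"
  proof (rule map_cong[OF refl])
    fix a assume "a \<in> set (filter (\<lambda>a. qmem (rsub r a)) RnL)"
    then have "rsub r a \<in> set DLroots" using ground_local assms(2) by auto
    then show "x (Er a) * (z1 (Er (rsub r a)) * of_int (eps a (rsub r a))) = x (Er a) * (z2 (Er (rsub r a)) * of_int (eps a (rsub r a)))"
      using assms(5) DL_Er by auto
  qed
  show ?thesis unfolding lbr_split[OF assms(1) r assms(3)] lbr_split[OF assms(1) r assms(4)] h m ..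
qed

lemma k2_qsupp: "qsupp (k2 x c1 c2 c3)"
proof -
  have "set [[0,0,0,0,0,1,0,0], [0,0,0,0,0,0,1,0], [0,0,0,0,0,1,1,0], [0,0,0,0,0,-1,0,0], [0,0,0,0,0,0,-1,0], [0,0,0,0,0,-1,-1,0], [0,0,0,1,0,0,0,0], [0,1,0,1,0,0,0,0], [0,0,1,1,0,0,0,0], [1,0,1,1,0,0,0,0], [0,1,1,1,0,0,0,0], [1,1,1,1,0,0,0,0]] \<subseteq> set QL" unfolding QL_def by simp
  moreover have "k2 x c1 c2 c3 (Er b) \<noteq> 0 \<Longrightarrow> b \<in> set [[0,0,0,0,0,1,0,0], [0,0,0,0,0,0,1,0], [0,0,0,0,0,1,1,0], [0,0,0,0,0,-1,0,0], [0,0,0,0,0,0,-1,0], [0,0,0,0,0,-1,-1,0], [0,0,0,1,0,0,0,0], [0,1,0,1,0,0,0,0], [0,0,1,1,0,0,0,0], [1,0,1,1,0,0,0,0], [0,1,1,1,0,0,0,0], [1,1,1,1,0,0,0,0]]" for b unfolding k2_def by (auto split: if_splits)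
  ultimately show ?thesis unfolding qsupp_def by auto
qed

lemma chi_exists: fixes w1 w2 w3 m1 m2 m3 :: "'k::field" assumes "\<not> (w1 = 0 \<and> w2 = 0 \<and> w3 = 0)"
  shows "\<exists>c1 c2 c3. \<not> (c1 = 0 \<and> c2 = 0 \<and> c3 = 0) \<and> c1*w1 + c2*w2 + c3*w3 = 0 \<and> c1*m1 + c2*m2 + c3*m3 = 0"
proof (cases "w2*m3 - w3*m2 = 0 \<and> w3*m1 - w1*m3 = 0 \<and> w1*m2 - w2*m1 = 0")
  case False
  show ?thesis
    by (rule exI[of _ "w2*m3 - w3*m2"], rule exI[of _ "w3*m1 - w1*m3"], rule exI[of _ "w1*m2 - w2*m1"])
       (use False in \<open>simp add: algebra_simps\<close>)
next
  case True
  then have p1: "w2*m3 = w3*m2" and p2: "w3*m1 = w1*m3" and p3: "w1*m2 = w2*m1" by simp_all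
  show ?thesis
  proof (cases "w1 = 0")
    case False
    show ?thesis
      by (rule exI[of _ "-w3"], rule exI[of _ 0], rule exI[of _ "w1"]) (use False p2 in \<open>simp add: algebra_simps\<close>)
  next
    case w1: True
    show ?thesis
    proof (cases "w2 = 0")
      case False
      show ?thesis
        by (rule exI[of _ "w2"], rule exI[of _ "-w1"], rule exI[of _ 0]) (use False p3 in \<open>simp add: algebra_simps\<close>)
    next
      case True
      then have "w3 \<noteq> 0" using w1 assms by simp
      show ?thesis
        by (rule exI[of _ 0], rule exI[of _ "w3"], rule exI[of _ "-w2"]) (use \<open>w3 \<noteq> 0\<close> p1 in \<open>simp add: algebra_simps\<close>)
    qed
  qed
qed

lemma k2_nz: fixes w1 w2 w3 c1 c2 c3 :: "'k::field"
  assumes "\<not> (w1 = 0 \<and> w2 = 0 \<and> w3 = 0)" "\<not> (c1 = 0 \<and> c2 = 0 \<and> c3 = 0)" "c1*w1 + c2*w2 + c3*w3 = 0"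
  shows "-(w1*c1) \<noteq> 0 \<or> w3*c3 \<noteq> 0 \<or> w2*c1 \<noteq> 0 \<or> w3*c2 \<noteq> 0 \<or> w3*c1 \<noteq> 0 \<or> -(w1*c2) \<noteq> 0 \<or> -(w2*c3) \<noteq> 0 \<or> -(w1*c3) \<noteq> 0"
proof (rule ccontr)
  assume "\<not> ?thesis"
  then have z: "w1*c1 = 0" "w3*c3 = 0" "w2*c1 = 0" "w3*c2 = 0" "w3*c1 = 0" "w1*c2 = 0" "w2*c3 = 0" "w1*c3 = 0" by simp_all
  have "w2*c2 = (c1*w1 + c2*w2 + c3*w3) - w1*c1 - w3*c3" by (simp add: algebra_simps)
  then have "w2*c2 = 0" using assms(3) z by simp
  then show False using z assms(1,2) by auto
qed

typedef ix = "{..<(31::nat)}" morphisms Rep_ix Abs_ix by (rule exI[of _ 0]) simp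

instance ix :: finite
proof
  have "(UNIV :: ix set) = Abs_ix ` {..<31}" by (metis type_definition.Abs_image type_definition_ix)
  then show "finite (UNIV :: ix set)" by (metis finite_lessThan finite_imageI)
qed

lemma Rep_ix_lt: "Rep_ix j < 31" using Rep_ix by auto
lemma Abs_ix_inv: "k < 31 \<Longrightarrow> Rep_ix (Abs_ix k) = k" by (simp add: Abs_ix_inverse)

definition emb :: "'k^ix \<Rightarrow> idx \<Rightarrow> 'k::field" where
  "emb v c = (\<Sum>j\<in>UNIV. if DL ! Rep_ix j = c then v $ j else 0)"

lemma emb_nth: assumes "k < 31" shows "emb v (DL ! k) = v $ Abs_ix k"
proof -
  have "DL ! Rep_ix j = DL ! k \<longleftrightarrow> j = Abs_ix k" for j
  proof -
    have "DL ! Rep_ix j = DL ! k \<longleftrightarrow> Rep_ix j = k"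
      using nth_eq_iff_index_eq[OF dDL] Rep_ix_lt assms len_DL by auto
    also have "\<dots> \<longleftrightarrow> j = Abs_ix k" using assms Rep_ix_inverse Abs_ix_inv by metis
    finally show ?thesis .
  qed
  then show ?thesis unfolding emb_def by simp
qed

lemma emb_notin: assumes "c \<notin> set DL" shows "emb v c = 0"
  unfolding emb_def
proof (intro sum.neutral ballI)
  fix j :: ix
  have "DL ! Rep_ix j \<in> set DL" using Rep_ix_lt[of j] len_DL by (metis nth_mem)
  then show "(if DL ! Rep_ix j = c then v $ j else 0) = 0" using assms by auto
qed

lemma emb_add: "emb (v + w) = (\<lambda>c. emb v c + emb w c)"
  unfolding emb_def by (auto simp: sum.distrib[symmetric] intro!: sum.cong)
lemma emb_scale: "emb (a *s v) = (\<lambda>c. a * emb v c)"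
  unfolding emb_def by (auto simp: sum_distrib_left intro!: sum.cong)

lemma lbr_add2: "lbr x (\<lambda>c. y c + z c) d = lbr x y d + lbr x z d"
  unfolding lbr_def by (simp add: distrib_left distrib_right sum.distrib)
lemma lbr_scale2: "lbr x (\<lambda>c. a * y c) d = a * lbr x y d"
  unfolding lbr_def by (simp add: sum_distrib_left mult_ac)

lemma emb_agree: assumes "k < 31" shows "emb (\<chi> j. f (DL ! Rep_ix j)) (DL ! k) = f (DL ! k)"
proof -
  have "emb (\<chi> j. f (DL ! Rep_ix j)) (DL ! k) = (\<chi> j. f (DL ! Rep_ix j)) $ Abs_ix k" by (rule emb_nth[OF assms])
  also have "\<dots> = f (DL ! Rep_ix (Abs_ix k))" by (rule vec_lambda_beta)
  also have "\<dots> = f (DL ! k)" using Abs_ix_inv[OF assms] by simp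
  finally show ?thesis .
qed

lemma emb_of: assumes "\<forall>c. c \<notin> set DL \<longrightarrow> f c = 0" shows "emb (\<chi> j. f (DL ! Rep_ix j)) = f"
proof
  fix c show "emb (\<chi> j. f (DL ! Rep_ix j)) c = f c"
  proof (cases "c \<in> set DL")
    case True
    then obtain k where k: "k < 31" "c = DL ! k" using len_DL by (metis in_set_conv_nth)
    then show ?thesis using emb_agree[OF k(1)] by simp
  next
    case False then show ?thesis using emb_notin assms by simp
  qed
qed

lemma emb_qsupp: "qsupp (emb v)"
proof -
  have "set DLroots \<subseteq> set QL" unfolding DLroots_def QL_def by simp
  then show ?thesis unfolding qsupp_def using emb_notin unfolding DL_def by auto
qed

definition psi :: "(idx \<Rightarrow> 'k::field) \<Rightarrow> ix \<Rightarrow> 'k^ix \<Rightarrow> 'k^ix" where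
  "psi x j0 v = (\<chi> j. if Rep_ix j < 30 then lbr x (emb v) (Er (outL ! Rep_ix j)) else v $ j0)"

lemma psi_linear: fixes x :: "idx \<Rightarrow> 'k::field" shows "Vector_Spaces.linear (*s) (*s) (psi x j0)"
  unfolding Vector_Spaces.linear_iff
proof (intro conjI allI)
  show "vector_space ((*s) :: 'k \<Rightarrow> 'k^ix \<Rightarrow> 'k^ix)" by (rule vec.vector_space_axioms)
  show "vector_space ((*s) :: 'k \<Rightarrow> 'k^ix \<Rightarrow> 'k^ix)" by (rule vec.vector_space_axioms)
  fix v w :: "'k^ix" and c :: 'k
  show "psi x j0 (v + w) = psi x j0 v + psi x j0 w"
    unfolding psi_def emb_add lbr_add2 by (simp add: vec_eq_iff)
  show "psi x j0 (c *s v) = c *s psi x j0 v"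
    unfolding psi_def emb_scale lbr_scale2 by (simp add: vec_eq_iff)
qed

lemma psi_zero: fixes x :: "idx \<Rightarrow> 'k::field" shows "psi x j0 0 = 0"
proof -
  have "psi x j0 ((0::'k) *s (0::'k^ix)) = (0::'k) *s psi x j0 0" using psi_linear[of x j0] unfolding Vector_Spaces.linear_iff by blast
  then show ?thesis by simp
qed

lemma t_in_nST: fixes u :: "'k::field^ix"
  defines "t \<equiv> (\<lambda>c. case c of Hc i \<Rightarrow> 0 | Er b \<Rightarrow> (\<Sum>k<30. if outL ! k = b then u $ Abs_ix k else (0::'k)))"
  shows "t \<in> nST S8 T8" and "k < 30 \<Longrightarrow> t (Er (outL ! k)) = u $ Abs_ix k"
proof -
  have zero: "t (Er b) = 0" if "b \<notin> set outL" for b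
    unfolding t_def using that len_outL by (auto intro!: sum.neutral)
  show "t \<in> nST S8 T8" unfolding nST_RnL rspan_def hspan_def gE8_def
  proof (intro CollectI conjI allI impI ballI)
    fix c assume "c \<notin> basis"
    then show "t c = 0"
    proof (cases c)
      case (Er b) then have "b \<notin> roots" using \<open>c \<notin> basis\<close> unfolding basis_def by auto
      then have "b \<notin> set outL" using outL_roots by auto
      then show ?thesis using zero Er by simp
    qed (simp add: t_def)
  next
    fix a assume "a \<in> roots" "a \<notin> set RnL"
    then show "t (Er a) = 0" using zero outL_RnL by auto
  next
    fix i :: nat assume "i < 8" show "t (Hc i) = 0" by (simp add: t_def)
  qed
  assume k: "k < 30"
  have "outL ! k' = outL ! k \<longleftrightarrow> k' = k" if "k' < 30" for k'
    using nth_eq_iff_index_eq[OF d_outL] that k len_outL by auto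
  then have "(\<Sum>k'<30. if outL ! k' = outL ! k then u $ Abs_ix k' else 0) = (\<Sum>k'<30. if k' = k then u $ Abs_ix k' else 0)"
    by (intro sum.cong) auto
  also have "\<dots> = u $ Abs_ix k" using k by simp
  finally show "t (Er (outL ! k)) = u $ Abs_ix k" unfolding t_def by simp
qed

lemma no_rich_w0: fixes x :: "idx \<Rightarrow> 'k::field"
  assumes xn: "x \<in> nST S8 T8" and im: "lbr x ` qST S8 T8 = nST S8 T8"
    and w0: "x (Er [0,0,0,0,1,0,0,0]) = 0" "x (Er [0,0,0,0,1,1,0,0]) = 0" "x (Er [0,0,0,0,1,1,1,0]) = 0"
  shows False
proof -
  define t :: "idx \<Rightarrow> 'k" where "t = (\<lambda>c. if c = Er [0,0,0,0,1,0,0,0] then 1 else 0)"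
  have a5: "[0,0,0,0,1,0,0,0] \<in> roots" "[0,0,0,0,1,0,0,0] \<in> set RnL" unfolding RnL_def RpL_def RmL_def by (simp_all add: roots_q60 q60_def)
  have "t \<in> nST S8 T8" unfolding nST_RnL rspan_def hspan_def gE8_def t_def
    using a5 by (auto simp: basis_def)
  then obtain y where y: "y \<in> qST S8 T8" "lbr x y = t" using im by (metis imageE)
  have "lbr x y (Er [0,0,0,0,1,0,0,0]) = 1" using y(2) by (simp add: t_def)
  moreover have "lbr x y (Er [0,0,0,0,1,0,0,0]) = 0"
    unfolding lbr_tab[OF xn a5(1) qST_qsupp[OF y(1)] tab_9 ptab_9]
    using w0 by (simp add: RnL_def RpL_def RmL_def)
  ultimately show False by simp
qed

lemma no_richardson: "\<not> (\<exists>x :: idx \<Rightarrow> 'k::field. richardson S8 T8 x)"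
proof
  assume "\<exists>x :: idx \<Rightarrow> 'k::field. richardson S8 T8 x"
  then obtain x :: "idx \<Rightarrow> 'k" where xn: "x \<in> nST S8 T8" and im: "lbr x ` qST S8 T8 = nST S8 T8"
    unfolding richardson_def by blast
  show False
  proof (cases "x (Er [0,0,0,0,1,0,0,0]) = 0 \<and> x (Er [0,0,0,0,1,1,0,0]) = 0 \<and> x (Er [0,0,0,0,1,1,1,0]) = 0")
    case True then show False using no_rich_w0[OF xn im] by blast
  next
    case wnz: False
    obtain c1 c2 c3 where cnz: "\<not> (c1 = 0 \<and> c2 = 0 \<and> c3 = 0)" and h1: "c1 * x (Er [0,0,0,0,1,0,0,0]) + c2 * x (Er [0,0,0,0,1,1,0,0]) + c3 * x (Er [0,0,0,0,1,1,1,0]) = 0" and h2: "c1 * x (Er [0,0,0,0,0,-1,-1,-1]) + c2 * x (Er [0,0,0,0,0,0,-1,-1]) + c3 * x (Er [0,0,0,0,0,0,0,-1]) = 0"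
      using chi_exists[OF wnz, of "x (Er [0,0,0,0,0,-1,-1,-1])" "x (Er [0,0,0,0,0,0,-1,-1])" "x (Er [0,0,0,0,0,0,0,-1])"] by blast
    define K1 where "K1 = k1 x"
    define K2 where "K2 = k2 x c1 c2 c3"
    have kz: "\<forall>r\<in>set outL. lbr x K1 (Er r) = 0 \<and> lbr x K2 (Er r) = 0"
      unfolding K1_def K2_def outL_def using kz_0[OF xn k2_qsupp h1 h2] kz_1[OF xn k2_qsupp h1 h2] kz_2[OF xn k2_qsupp h1 h2] kz_3[OF xn k2_qsupp h1 h2] kz_4[OF xn k2_qsupp h1 h2] kz_5[OF xn k2_qsupp h1 h2] kz_6[OF xn k2_qsupp h1 h2] kz_7[OF xn k2_qsupp h1 h2] kz_8[OF xn k2_qsupp h1 h2] kz_9[OF xn k2_qsupp h1 h2] kz_10[OF xn k2_qsupp h1 h2] kz_11[OF xn k2_qsupp h1 h2] kz_12[OF xn k2_qsupp h1 h2] kz_13[OF xn k2_qsupp h1 h2] kz_14[OF xn k2_qsupp h1 h2] kz_15[OF xn k2_qsupp h1 h2] kz_16[OF xn k2_qsupp h1 h2] kz_17[OF xn k2_qsupp h1 h2] kz_18[OF xn k2_qsupp h1 h2] kz_19[OF xn k2_qsupp h1 h2] kz_20[OF xn k2_qsupp h1 h2] kz_21[OF xn k2_qsupp h1 h2] kz_22[OF xn k2_qsupp h1 h2] kz_23[OF xn k2_qsupp h1 h2] kz_24[OF xn k2_qsupp h1 h2] kz_25[OF xn k2_qsupp h1 h2] kz_26[OF xn k2_qsupp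 h1 h2] kz_27[OF xn k2_qsupp h1 h2] kz_28[OF xn k2_qsupp h1 h2] kz_29[OF xn k2_qsupp h1 h2] by simp
    have K1s: "\<forall>c. c \<notin> set DL \<longrightarrow> K1 c = 0"
    proof (intro allI impI)
      fix c assume "c \<notin> set DL"
      moreover have "set AWL \<subseteq> set DLroots" unfolding AWL_def DLroots_def by simp
      ultimately show "K1 c = 0" unfolding K1_def k1_def using DL_Er by (cases c) auto
    qed
    have K2s: "\<forall>c. c \<notin> set DL \<longrightarrow> K2 c = 0"
    proof (intro allI impI)
      fix c assume c: "c \<notin> set DL"
      show "K2 c = 0"
      proof (cases c)
        case (Hc i) then show ?thesis using c DL_Hc[of 5] DL_Hc[of 6] unfolding K2_def k2_def by auto
      next
        case (Er b)
        have "K2 (Er b) \<noteq> 0 \<Longrightarrow> Er b \<in> set DL" unfolding K2_def k2_def DL_def DLroots_def by (auto split: if_splits)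
        then show ?thesis using c Er by auto
      qed
    qed
    define k1v :: "'k^ix" where "k1v = (\<chi> j. K1 (DL ! Rep_ix j))"
    define k2v :: "'k^ix" where "k2v = (\<chi> j. K2 (DL ! Rep_ix j))"
    have e1: "emb k1v = K1" unfolding k1v_def by (rule emb_of[OF K1s])
    have e2: "emb k2v = K2" unfolding k2v_def by (rule emb_of[OF K2s])
    have DLv: "DL ! 5 = Hc 5" "DL ! 6 = Hc 6" "DL ! 8 = Er [0,0,0,0,0,1,0,0]" "DL ! 9 = Er [0,0,0,0,0,0,1,0]" "DL ! 10 = Er [0,0,0,0,0,1,1,0]"
       "DL ! 11 = Er [0,0,0,0,0,-1,0,0]" "DL ! 12 = Er [0,0,0,0,0,0,-1,0]" "DL ! 13 = Er [0,0,0,0,0,-1,-1,0]" "DL ! 28 = Er [0,0,0,0,1,0,0,0]" "DL ! 29 = Er [0,0,0,0,1,1,0,0]" "DL ! 30 = Er [0,0,0,0,1,1,1,0]"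
      unfolding DL_def DLroots_def by simp_all
    have "K2 (DL ! 5) \<noteq> 0 \<or> K2 (DL ! 6) \<noteq> 0 \<or> K2 (DL ! 8) \<noteq> 0 \<or> K2 (DL ! 9) \<noteq> 0 \<or>
       K2 (DL ! 10) \<noteq> 0 \<or> K2 (DL ! 11) \<noteq> 0 \<or> K2 (DL ! 12) \<noteq> 0 \<or> K2 (DL ! 13) \<noteq> 0"
      using k2_nz[OF wnz cnz h1] unfolding DLv K2_def k2_def by simp
    then have "\<exists>p\<in>{5,6,8,9,10,11,12,13::nat}. K2 (DL ! p) \<noteq> 0" by auto
    then obtain p where p: "p \<in> {5,6,8,9,10,11,12,13::nat}" "K2 (DL ! p) \<noteq> 0" by blast
    have p31: "p < 31" using p(1) by auto
    define j0 where "j0 = Abs_ix p"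
    have k2j0: "k2v $ j0 \<noteq> 0" unfolding k2v_def j0_def using p(2) Abs_ix_inv[OF p31] by simp
    have k1j0: "k1v $ j0 = 0"
    proof -
      have "K1 (DL ! p) = 0" using p(1) by (auto simp: K1_def k1_def DLv AWL_def)
      then show ?thesis unfolding k1v_def j0_def using Abs_ix_inv[OF p31] by simp
    qed
    let ?P = "psi x j0"
    have lin: "Vector_Spaces.linear (*s) (*s) ?P" by (rule psi_linear)
    have ex: "\<exists>v. ?P v = u" for u :: "'k^ix"
    proof -
      define t :: "idx \<Rightarrow> 'k" where "t = (\<lambda>c. case c of Hc i \<Rightarrow> 0 | Er b \<Rightarrow> (\<Sum>k<30. if outL ! k = b then u $ Abs_ix k else (0::'k)))"
      have tn: "t \<in> nST S8 T8" unfolding t_def by (rule t_in_nST(1))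
      have tv: "k < 30 \<Longrightarrow> t (Er (outL ! k)) = u $ Abs_ix k" for k unfolding t_def by (rule t_in_nST(2))
      obtain y where y: "y \<in> qST S8 T8" "lbr x y = t" using tn im by (metis imageE)
      define v0 :: "'k^ix" where "v0 = (\<chi> j. y (DL ! Rep_ix j))"
      have ag: "\<forall>c\<in>set DL. emb v0 c = y c"
        unfolding v0_def using emb_agree len_DL by (metis in_set_conv_nth)
      define s where "s = (u $ Abs_ix 30 - v0 $ j0) / k2v $ j0"
      define v where "v = v0 + s *s k2v"
      have "?P v = u"
      proof (subst vec_eq_iff, intro allI)
        fix j :: ix
        show "?P v $ j = u $ j"
        proof (cases "Rep_ix j < 30")
          case True
          let ?r = "outL ! Rep_ix j"
          have rin: "?r \<in> set outL" using True len_outL by simp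
          have "?P v $ j = lbr x (emb v) (Er ?r)" unfolding psi_def using True by simp
          also have "\<dots> = lbr x (emb v0) (Er ?r) + s * lbr x K2 (Er ?r)"
            unfolding v_def emb_add emb_scale lbr_add2 lbr_scale2 e2 ..
          also have "lbr x K2 (Er ?r) = 0" using kz rin by auto
          also have "lbr x (emb v0) (Er ?r) = lbr x y (Er ?r)"
            by (rule lbr_local[OF xn rin emb_qsupp qST_qsupp[OF y(1)] ag])
          also have "\<dots> = u $ Abs_ix (Rep_ix j)" using y(2) tv True by simp
          finally show ?thesis by (simp add: Rep_ix_inverse)
        next
          case False
          then have "Rep_ix j = 30" using Rep_ix_lt[of j] by simp
          then have jj: "j = Abs_ix 30" by (metis Rep_ix_inverse)
          have "?P v $ j = v $ j0" unfolding psi_def using False by simp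
          also have "\<dots> = v0 $ j0 + s * k2v $ j0" unfolding v_def by simp
          also have "\<dots> = u $ Abs_ix 30" unfolding s_def using k2j0 by simp
          finally show ?thesis using jj by simp
        qed
      qed
      then show ?thesis by blast
    qed
    have surj: "surj ?P" unfolding surj_def using ex by metis
    have inj: "inj ?P" by (rule vec.linear_surj_imp_inj[OF lin surj])
    have P0: "?P k1v = ?P 0"
    proof -
      have "?P 0 = 0" by (rule psi_zero)
      moreover have "?P k1v = 0"
      proof (subst vec_eq_iff, intro allI)
        fix j :: ix
        show "?P k1v $ j = 0 $ j"
        proof (cases "Rep_ix j < 30")
          case True
          then have "outL ! Rep_ix j \<in> set outL" using len_outL by simp
          then show ?thesis unfolding psi_def e1 using True kz by simp
        next
          case False then show ?thesis unfolding psi_def using k1j0 by simp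
        qed
      qed
      ultimately show ?thesis by simp
    qed
    have "k1v \<noteq> 0"
    proof
      assume k0: "k1v = 0"
      have "k1v $ Abs_ix 28 = x (Er [0,0,0,0,1,0,0,0])" "k1v $ Abs_ix 29 = x (Er [0,0,0,0,1,1,0,0])" "k1v $ Abs_ix 30 = x (Er [0,0,0,0,1,1,1,0])"
        unfolding k1v_def K1_def k1_def by (simp_all add: Abs_ix_inv DLv AWL_def)
      then show False using k0 wnz by simp
    qed
    then show False using inj P0 by (metis injD)
  qed
qed

theorem mainTheorem6:
  shows "card ((rootsub S8 \<union> negroots) \<inter> (rootsub T8 \<union> posroots)) + 8 = 81
    \<and> card (RplusST S8 T8) = 56 \<and> card (RminusST S8 T8) = 3
    \<and> \<not> (\<exists>x :: idx \<Rightarrow> 'k :: {alg_closed_field, field_char_0}. richardson S8 T8 x)"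
  using card_part no_richardson by blast

end
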